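(* Let $d\ge3$, let $X$ be Brownian motion with drift $\mu=(\mu_1,\dots,\mu_d)$, $\mu_i\in\mathbf K_{d,1}$, with transition density $q(t,x,y)$, and let $b\ge0$ be a function in $\mathbf K_{d,1}$. Then for all $\lambda>0$, $t>0$ and $x\in\mathbb R^d$, $$\mathbb E_x\Big[e^{\lambda\int_0^tb(X_s)ds}\Big]\le\big(1+\lambda\sqrt t\,\Lambda_t(b)\big)\exp\big(\lambda^2t\Lambda_t(b)^2\big)\le 2\exp\big(2\lambda^2t\Lambda_t(b)^2\big).$$
   Context: A signed measure $\nu$ on $\mathbb R^d$ belongs to the Kato class $\mathbf K_{d,1}$ if $\lim_{r\downarrow0}\sup_{x}\int_{|x-y|\le r}|x-y|^{-(d-1)}|\nu|(dy)=0$; a function $f$ is in $\mathbf K_{d,1}$ if $|f|dx$ is. Brownian motion with drift $\mu$ (each $\mu_i\in\mathbf K_{d,1}$) is the conservative Feller diffusion $\{X_t;\mathbb P_x\}$ on $\mathbb R^d$ with $X_t=x+W_t+A_t$, $W$ a standard Brownian motion, $A_t=\lim_n\int_0^tb^{(n)}(X_s)ds$ (in probability, locally uniformly in $t$), where $b^{(n)}_i=\varphi_n*\mu_i$ for a standard mollifier $\varphi_n(x)=2^{nd}\varphi(2^nx)$. It has a jointly continuous transition density $q(t,x,y)$. For a signed measure $\nu$, $\Lambda_t(\nu):=\sup_{x\in\mathbb R^d}\int_0^t\int_{\mathbb R^d}s^{-1/2}q(s,x,y)\,|\nu|(dy)\,ds$, and $\Lambda_t(f):=\Lambda_t(f\,dx)$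 for a function $f$. *)

theory Defs
  imports "HOL-Probability.Probability"
begin

definition enn_exp :: "ennreal \<Rightarrow> ennreal" where
  "enn_exp a = (if a = \<top> then \<top> else ennreal (exp (enn2real a)))"

definition kato_kernel :: "real^'d \<Rightarrow> real^'d \<Rightarrow> ennreal" where
  "kato_kernel x y = (if x = y then \<top>
      else ennreal (dist x y powr (- (real CARD('d) - 1))))"

text \<open>A (nonnegative) Borel measure nu, playing the role of the total variation |nu|.\<close>
definition kato_class :: "(real^'d) measure \<Rightarrow> bool" where
  "kato_class nu \<longleftrightarrow> sets nu = sets borel \<and>
     ((\<lambda>r. SUP x. \<integral>\<^sup>+ y\<in>cball x r. kato_kernel x y \<partial>nu) \<longlongrightarrow> 0) (at_right (0::real))"

definition kato_class_fun :: "(real^'d \<Rightarrow> real) \<Rightarrow> bool" where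
  "kato_class_fun f \<longleftrightarrow> f \<in> borel_measurable borel \<and>
     kato_class (density lborel (\<lambda>y. ennreal \<bar>f y\<bar>))"

text \<open>A signed measure is represented as nu = nup - nun with nonnegative Borel measures;
  it is in K_{d,1} iff (for the Jordan decomposition) both parts are.\<close>
definition kato_class_signed :: "(real^'d) measure \<Rightarrow> (real^'d) measure \<Rightarrow> bool" where
  "kato_class_signed nup nun \<longleftrightarrow> kato_class nup \<and> kato_class nun"

definition bump :: "real^'d \<Rightarrow> real" where
  "bump z = (if norm z < 1 then exp (- 1 / (1 - (norm z)\<^sup>2)) else 0)"

definition std_mollifier :: "real^'d \<Rightarrow> real" where
  "std_mollifier z = bump z / (\<integral> w. bump (w::real^'d) \<partial>lborel)"

definition mollifier_n :: "nat \<Rightarrow> real^'d \<Rightarrow> real" where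
  "mollifier_n n z = (2::real) ^ (n * CARD('d)) * std_mollifier (((2::real) ^ n) *\<^sub>R z)"

text \<open>b^(n)_i = phi_n * mu_i, with mu_i = mup i - mun i.\<close>
definition drift_n :: "('d \<Rightarrow> (real^'d) measure) \<Rightarrow> ('d \<Rightarrow> (real^'d) measure)
     \<Rightarrow> nat \<Rightarrow> real^'d \<Rightarrow> real^'d" where
  "drift_n mup mun n x = (\<chi> i. (\<integral> y. mollifier_n n (x - y) \<partial>(mup i))
                              - (\<integral> y. mollifier_n n (x - y) \<partial>(mun i)))"

definition gauss_density :: "real \<Rightarrow> real^'d \<Rightarrow> real" where
  "gauss_density \<tau> z = (2 * pi * \<tau>) powr (- real CARD('d) / 2) * exp (- (norm z)\<^sup>2 / (2 * \<tau>))"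

definition is_filtration :: "'w measure \<Rightarrow> (real \<Rightarrow> 'w measure) \<Rightarrow> bool" where
  "is_filtration Om F \<longleftrightarrow> filtration (space Om) F \<and> (\<forall>s. sets (F s) \<subseteq> sets Om)"

definition std_BM :: "'w measure \<Rightarrow> (real \<Rightarrow> 'w measure) \<Rightarrow> (real \<Rightarrow> 'w \<Rightarrow> real^'d) \<Rightarrow> bool" where
  "std_BM Pm F W \<longleftrightarrow>
     prob_space Pm \<and>
     (\<forall>t\<ge>0. W t \<in> borel_measurable (F t)) \<and>
     (AE \<omega> in Pm. W 0 \<omega> = 0 \<and> continuous_on {0..} (\<lambda>t. W t \<omega>)) \<and>
     (\<forall>s t A B. 0 \<le> s \<longrightarrow> s < t \<longrightarrow> A \<in> sets (F s) \<longrightarrow> B \<in> sets borel \<longrightarrow>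
        emeasure Pm (A \<inter> {\<omega>\<in>space Pm. W t \<omega> - W s \<omega> \<in> B})
          = emeasure Pm A * (\<integral>\<^sup>+ z\<in>B. ennreal (gauss_density (t - s) z) \<partial>lborel))"

definition trans_op :: "(real \<Rightarrow> real^'d \<Rightarrow> real^'d \<Rightarrow> real) \<Rightarrow> real
     \<Rightarrow> (real^'d \<Rightarrow> real) \<Rightarrow> real^'d \<Rightarrow> real" where
  "trans_op q t f x = (\<integral> y. q t x y * f y \<partial>lborel)"

definition feller_density :: "(real \<Rightarrow> real^'d \<Rightarrow> real^'d \<Rightarrow> real) \<Rightarrow> bool" where
  "feller_density q \<longleftrightarrow>
     (\<forall>t>0. \<forall>x y. 0 \<le> q t x y) \<and>
     (\<forall>t>0. \<forall>x. (\<integral>\<^sup>+ y. ennreal (q t x y) \<partial>lborel) = 1) \<and>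
     continuous_on ({0<..} \<times> UNIV \<times> UNIV) (\<lambda>(t, x, y). q t x y) \<and>
     (\<forall>f::real^'d \<Rightarrow> real. continuous_on UNIV f \<longrightarrow> (f \<longlongrightarrow> 0) at_infinity \<longrightarrow>
        (\<forall>t>0. continuous_on UNIV (trans_op q t f) \<and> (trans_op q t f \<longlongrightarrow> 0) at_infinity) \<and>
        (\<forall>\<epsilon>>0. \<exists>\<delta>>0. \<forall>t. 0 < t \<and> t < \<delta> \<longrightarrow> (\<forall>x. \<bar>trans_op q t f x - f x\<bar> < \<epsilon>)))"

definition markov_density :: "'w measure \<Rightarrow> (real^'d \<Rightarrow> 'w measure) \<Rightarrow> (real \<Rightarrow> 'w measure)
     \<Rightarrow> (real \<Rightarrow> 'w \<Rightarrow> real^'d) \<Rightarrow> (real \<Rightarrow> real^'d \<Rightarrow> real^'d \<Rightarrow> real) \<Rightarrow> bool" where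
  "markov_density Om P F X q \<longleftrightarrow>
     (\<forall>x s t A (f :: real^'d \<Rightarrow> ennreal). 0 \<le> s \<longrightarrow> 0 < t \<longrightarrow> A \<in> sets (F s) \<longrightarrow>
        f \<in> borel_measurable borel \<longrightarrow>
        (\<integral>\<^sup>+ \<omega>. indicator A \<omega> * f (X (s + t) \<omega>) \<partial>(P x))
          = (\<integral>\<^sup>+ \<omega>. indicator A \<omega> * (\<integral>\<^sup>+ y. ennreal (q t (X s \<omega>) y) * f y \<partial>lborel) \<partial>(P x)))"

text \<open>Brownian motion with drift mu = (mup i - mun i)_i, mu_i in K_{d,1}:
  the conservative Feller diffusion (P x, X) on the measurable space Om with filtration F and
  jointly continuous transition density q, such that under P x, X_t = x + W_t + A_t, where
  W (depending on x) is a standard (F_t)-Brownian motion and A_t is the limit in P x-probability,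
  locally uniformly in t, of the integrals of b^(n)(X_s) over [0,t].\<close>
definition BM_with_drift ::
  "'w measure \<Rightarrow> (real^'d \<Rightarrow> 'w measure) \<Rightarrow> (real \<Rightarrow> 'w measure) \<Rightarrow> (real \<Rightarrow> 'w \<Rightarrow> real^'d)
   \<Rightarrow> (real^'d \<Rightarrow> real \<Rightarrow> 'w \<Rightarrow> real^'d) \<Rightarrow> (real \<Rightarrow> real^'d \<Rightarrow> real^'d \<Rightarrow> real)
   \<Rightarrow> ('d \<Rightarrow> (real^'d) measure) \<Rightarrow> ('d \<Rightarrow> (real^'d) measure) \<Rightarrow> bool" where
  "BM_with_drift Om P F X W q mup mun \<longleftrightarrow>
     (\<forall>i. kato_class_signed (mup i) (mun i)) \<and>
     is_filtration Om F \<and>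
     (\<forall>x. prob_space (P x) \<and> sets (P x) = sets Om) \<and>
     (\<forall>t\<ge>0. X t \<in> borel_measurable (F t)) \<and>
     (\<forall>x. AE \<omega> in P x. X 0 \<omega> = x \<and> continuous_on {0..} (\<lambda>t. X t \<omega>)) \<and>
     feller_density q \<and>
     markov_density Om P F X q \<and>
     (\<forall>x. std_BM (P x) F (W x)) \<and>
     (\<forall>x T \<epsilon> \<delta>. 0 < T \<longrightarrow> 0 < \<epsilon> \<longrightarrow> 0 < \<delta> \<longrightarrow>
        (\<exists>N. \<forall>n\<ge>N. \<exists>E\<in>sets Om.
           {\<omega>\<in>space Om. \<exists>t\<in>{0..T}.
               \<epsilon> < norm ((X t \<omega> - x - W x t \<omega>) - integral {0..t} (\<lambda>s. drift_n mup mun n (X s \<omega>)))}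
             \<subseteq> E \<and> measure (P x) E < \<delta>))"

text \<open>Lambda_t(nu) for a signed measure nu, given through its total variation measure nuabs.\<close>
definition Lambda :: "(real \<Rightarrow> real^'d \<Rightarrow> real^'d \<Rightarrow> real) \<Rightarrow> real \<Rightarrow> (real^'d) measure \<Rightarrow> ennreal" where
  "Lambda q t nuabs = (SUP x. \<integral>\<^sup>+ s\<in>{0<..t}.
       (\<integral>\<^sup>+ y. ennreal (s powr (-1/2) * q s x y) \<partial>nuabs) \<partial>lborel)"

definition Lambda_fun :: "(real \<Rightarrow> real^'d \<Rightarrow> real^'d \<Rightarrow> real) \<Rightarrow> real \<Rightarrow> (real^'d \<Rightarrow> real) \<Rightarrow> ennreal" where
  "Lambda_fun q t f = Lambda q t (density lborel (\<lambda>y. ennreal \<bar>f y\<bar>))"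

end

theory Submission
  imports Defs
begin


lemma ind_ioo_eq: "indicator {a<..<c} u = (if a < u \<and> u < (c::real) then 1 else (0::ennreal))"
  by (auto simp: indicator_def)

lemma meas_ind2[measurable]:
  assumes [measurable]: "f \<in> borel_measurable borel"
  shows "(\<lambda>(s::real,u::real). indicator {s<..<c} u * (f u::ennreal)) \<in> borel_measurable (borel \<Otimes>\<^sub>M borel)"
  unfolding ind_ioo_eq by measurable

lemma meas_F[measurable]:
  assumes [measurable]: "f \<in> borel_measurable borel"
  shows "(\<lambda>s::real. \<integral>\<^sup>+u. indicator {s<..<c} u * (f u::ennreal) \<partial>lborel) \<in> borel_measurable borel"
proof -
  have "(\<lambda>s::real. \<integral>\<^sup>+u. indicator {s<..<c} u * (f u::ennreal) \<partial>lborel) \<in> borel_measurable (borel::real measure)"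
    using lborel.borel_measurable_nn_integral[of "\<lambda>s u. indicator {s<..<c} u * f u" borel] meas_ind2[OF assms]
    by (simp add: measurable_lborel2 sets_lborel cong: measurable_cong_sets)
  then show ?thesis .
qed


lemma lborel_diag_null:
  fixes g :: "real \<Rightarrow> ennreal"
  shows "(\<integral>\<^sup>+s. indicator {u} s * g s \<partial>lborel) = 0"
proof -
  have "(\<integral>\<^sup>+s. indicator {u} s * g s \<partial>lborel) = (\<integral>\<^sup>+s. g u * indicator {u} s \<partial>lborel)"
    by (rule nn_integral_cong) (auto simp: indicator_def)
  then show ?thesis by (simp add: nn_integral_cmult_indicator)
qed

lemma power_identity:
  fixes f :: "real \<Rightarrow> ennreal" and c :: real
  assumes fm[measurable]: "f \<in> borel_measurable borel"
  defines "F \<equiv> \<lambda>a. \<integral>\<^sup>+u. indicator {a<..<c} u * f u \<partial>lborel"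
  shows "F a ^ Suc n = of_nat (Suc n) * (\<integral>\<^sup>+s. indicator {a<..<c} s * (f s * F s ^ n) \<partial>lborel)"
proof (induction n arbitrary: a)
  case 0
  show ?case by (simp add: F_def)
next
  case (Suc n)
  have Fm[measurable]: "F \<in> borel_measurable borel" unfolding F_def by measurable
  define g where "g = (\<lambda>s. f s * F s ^ n)"
  have gm[measurable]: "g \<in> borel_measurable borel" unfolding g_def by measurable
  let ?H = "\<lambda>u s. indicator {a<..<c} u * f u * (indicator {a<..<c} s * g s)"
  have split: "?H u s = (if s < u then ?H u s else 0) + (if u < s then ?H u s else 0) + indicator {u} s * ?H u s" for u s
    by (auto simp: indicator_def)
  have "F a ^ Suc (Suc n) = F a * F a ^ Suc n" by simp
  also have "\<dots> = F a * (of_nat (Suc n) * (\<integral>\<^sup>+s. indicator {a<..<c} s * g s \<partial>lborel))"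
    using Suc by (simp add: g_def)
  also have "\<dots> = of_nat (Suc n) * (F a * (\<integral>\<^sup>+s. indicator {a<..<c} s * g s \<partial>lborel))"
    by (simp add: ac_simps)
  also have "F a * (\<integral>\<^sup>+s. indicator {a<..<c} s * g s \<partial>lborel) = (\<integral>\<^sup>+u. \<integral>\<^sup>+s. ?H u s \<partial>lborel \<partial>lborel)"
  proof -
    have "F a * (\<integral>\<^sup>+s. indicator {a<..<c} s * g s \<partial>lborel) = (\<integral>\<^sup>+u. indicator {a<..<c} u * f u * (\<integral>\<^sup>+s. indicator {a<..<c} s * g s \<partial>lborel) \<partial>lborel)"
      unfolding F_def by (rule nn_integral_multc[symmetric]) simp
    also have "\<dots> = (\<integral>\<^sup>+u. \<integral>\<^sup>+s. ?H u s \<partial>lborel \<partial>lborel)"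
      by (rule nn_integral_cong, rule nn_integral_cmult[symmetric]) simp
    finally show ?thesis .
  qed
  also have "\<dots> = (\<integral>\<^sup>+u. (\<integral>\<^sup>+s. (if s < u then ?H u s else 0) \<partial>lborel) + (\<integral>\<^sup>+s. (if u < s then ?H u s else 0) \<partial>lborel) \<partial>lborel)"
  proof (rule nn_integral_cong)
    fix u
    have "(\<integral>\<^sup>+s. ?H u s \<partial>lborel) = (\<integral>\<^sup>+s. (if s < u then ?H u s else 0) + (if u < s then ?H u s else 0) + indicator {u} s * ?H u s \<partial>lborel)"
      by (subst split) simp
    also have "\<dots> = (\<integral>\<^sup>+s. (if s < u then ?H u s else 0) \<partial>lborel) + (\<integral>\<^sup>+s. (if u < s then ?H u s else 0) \<partial>lborel) + (\<integral>\<^sup>+s. indicator {u} s * ?H u s \<partial>lborel)"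
      by (subst nn_integral_add; (subst nn_integral_add)?) auto
    also have "(\<integral>\<^sup>+s. indicator {u} s * ?H u s \<partial>lborel) = 0" by (rule lborel_diag_null)
    finally show "(\<integral>\<^sup>+s. ?H u s \<partial>lborel) = (\<integral>\<^sup>+s. (if s < u then ?H u s else 0) \<partial>lborel) + (\<integral>\<^sup>+s. (if u < s then ?H u s else 0) \<partial>lborel)" by simp
  qed
  also have "\<dots> = (\<integral>\<^sup>+u. \<integral>\<^sup>+s. (if s < u then ?H u s else 0) \<partial>lborel \<partial>lborel) + (\<integral>\<^sup>+u. \<integral>\<^sup>+s. (if u < s then ?H u s else 0) \<partial>lborel \<partial>lborel)"
    by (rule nn_integral_add) auto
  also have "(\<integral>\<^sup>+u. \<integral>\<^sup>+s. (if s < u then ?H u s else 0) \<partial>lborel \<partial>lborel) = (\<integral>\<^sup>+s. \<integral>\<^sup>+u. (if s < u then ?H u s else 0) \<partial>lborel \<partial>lborel)"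
    by (rule lborel_pair.Fubini'[symmetric]) (simp add: measurable_lborel2 sets_lborel)
  also have "\<dots> = (\<integral>\<^sup>+s. indicator {a<..<c} s * (f s * F s ^ Suc n) \<partial>lborel)"
  proof (rule nn_integral_cong)
    fix s
    have "(\<integral>\<^sup>+u. (if s < u then ?H u s else 0) \<partial>lborel) = (\<integral>\<^sup>+u. (indicator {a<..<c} s * g s) * (indicator {s<..<c} u * f u) \<partial>lborel)"
      by (rule nn_integral_cong) (auto simp: indicator_def mult.commute)
    also have "\<dots> = (indicator {a<..<c} s * g s) * F s"
      unfolding F_def by (rule nn_integral_cmult) simp
    finally show "(\<integral>\<^sup>+u. (if s < u then ?H u s else 0) \<partial>lborel) = indicator {a<..<c} s * (f s * F s ^ Suc n)"
      by (simp add: g_def ac_simps)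
  qed
  also have "(\<integral>\<^sup>+u. \<integral>\<^sup>+s. (if u < s then ?H u s else 0) \<partial>lborel \<partial>lborel) = (\<integral>\<^sup>+u. indicator {a<..<c} u * f u * (\<integral>\<^sup>+s. indicator {u<..<c} s * g s \<partial>lborel) \<partial>lborel)"
  proof (rule nn_integral_cong)
    fix u
    have "(\<integral>\<^sup>+s. (if u < s then ?H u s else 0) \<partial>lborel) = (\<integral>\<^sup>+s. (indicator {a<..<c} u * f u) * (indicator {u<..<c} s * g s) \<partial>lborel)"
      by (rule nn_integral_cong) (auto simp: indicator_def)
    also have "\<dots> = indicator {a<..<c} u * f u * (\<integral>\<^sup>+s. indicator {u<..<c} s * g s \<partial>lborel)"
      by (rule nn_integral_cmult) simp
    finally show "(\<integral>\<^sup>+s. (if u < s then ?H u s else 0) \<partial>lborel) = indicator {a<..<c} u * f u * (\<integral>\<^sup>+s. indicator {u<..<c} s * g s \<partial>lborel)" .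
  qed
  finally have eq: "F a ^ Suc (Suc n) = of_nat (Suc n) * ((\<integral>\<^sup>+s. indicator {a<..<c} s * (f s * F s ^ Suc n) \<partial>lborel) +
      (\<integral>\<^sup>+u. indicator {a<..<c} u * f u * (\<integral>\<^sup>+s. indicator {u<..<c} s * g s \<partial>lborel) \<partial>lborel))" .
  have "of_nat (Suc n) * (\<integral>\<^sup>+u. indicator {a<..<c} u * f u * (\<integral>\<^sup>+s. indicator {u<..<c} s * g s \<partial>lborel) \<partial>lborel)
      = (\<integral>\<^sup>+u. indicator {a<..<c} u * f u * (of_nat (Suc n) * (\<integral>\<^sup>+s. indicator {u<..<c} s * g s \<partial>lborel)) \<partial>lborel)"
  proof -
    have Gm: "(\<lambda>u. indicator {a<..<c} u * f u * (\<integral>\<^sup>+s. indicator {u<..<c} s * g s \<partial>lborel)) \<in> borel_measurable lborel"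
      using meas_F[OF gm, of c] by measurable
    have "of_nat (Suc n) * (\<integral>\<^sup>+u. indicator {a<..<c} u * f u * (\<integral>\<^sup>+s. indicator {u<..<c} s * g s \<partial>lborel) \<partial>lborel) = (\<integral>\<^sup>+u. of_nat (Suc n) * (indicator {a<..<c} u * f u * (\<integral>\<^sup>+s. indicator {u<..<c} s * g s \<partial>lborel)) \<partial>lborel)"
      by (rule nn_integral_cmult[OF Gm, symmetric])
    then show ?thesis by (simp add: ac_simps)
  qed
  also have "\<dots> = (\<integral>\<^sup>+u. indicator {a<..<c} u * (f u * F u ^ Suc n) \<partial>lborel)"
    using Suc[symmetric] by (simp add: g_def mult.assoc)
  finally have e2: "of_nat (Suc n) * (\<integral>\<^sup>+u. indicator {a<..<c} u * f u * (\<integral>\<^sup>+s. indicator {u<..<c} s * g s \<partial>lborel) \<partial>lborel) = (\<integral>\<^sup>+u. indicator {a<..<c} u * (f u * F u ^ Suc n) \<partial>lborel)" .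
  show ?case unfolding eq distrib_left e2
    by (simp add: algebra_simps of_nat_Suc)
qed



primrec Tn :: "(real \<Rightarrow> ennreal) \<Rightarrow> real \<Rightarrow> nat \<Rightarrow> real \<Rightarrow> ennreal" where
  "Tn f c 0 a = 1"
| "Tn f c (Suc n) a = (\<integral>\<^sup>+s. indicator {a<..<c} s * (f s * Tn f c n s) \<partial>lborel)"

lemma Tn_joint_meas:
  fixes f :: "'w \<Rightarrow> real \<Rightarrow> ennreal"
  assumes fm[measurable]: "(\<lambda>(w,s). f w s) \<in> borel_measurable (M \<Otimes>\<^sub>M borel)"
  shows "(\<lambda>(w,a). Tn (f w) c n a) \<in> borel_measurable (M \<Otimes>\<^sub>M borel)"
proof (induction n)
  case 0
  then show ?case by simp
next
  case (Suc n)
  note IH[measurable] = Suc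
  have "(\<lambda>((w,a),s). indicator {a<..<c} s * (f w s * Tn (f w) c n s)) \<in> borel_measurable ((M \<Otimes>\<^sub>M borel) \<Otimes>\<^sub>M lborel)"
    unfolding ind_ioo_eq
  proof -
    have 1: "(\<lambda>((w,a),s). f w s) \<in> borel_measurable ((M \<Otimes>\<^sub>M borel) \<Otimes>\<^sub>M lborel)"
      using measurable_compose[OF _ fm, of "\<lambda>((w,a),s). (w,s)"] by (simp add: split_beta')
    have 2: "(\<lambda>((w,a),s). Tn (f w) c n s) \<in> borel_measurable ((M \<Otimes>\<^sub>M borel) \<Otimes>\<^sub>M lborel)"
      using measurable_compose[OF _ IH, of "\<lambda>((w,a),s). (w,s)"] by (simp add: split_beta')
    show "(\<lambda>((w,a),s). (if a < s \<and> s < c then 1 else 0) * (f w s * Tn (f w) c n s)) \<in> borel_measurable ((M \<Otimes>\<^sub>M borel) \<Otimes>\<^sub>M lborel)"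
      using 1 2 by (simp add: split_beta') measurable
  qed
  then show ?case
    using lborel.borel_measurable_nn_integral[of "\<lambda>(w,a) s. indicator {a<..<c} s * (f w s * Tn (f w) c n s)" "M \<Otimes>\<^sub>M borel"]
    by (simp add: split_beta')
qed

lemma Tn_meas[measurable]:
  assumes fm[measurable]: "f \<in> borel_measurable borel"
  shows "Tn f c n \<in> borel_measurable borel"
proof (induction n)
  case 0 then show ?case by simp
next
  case (Suc n)
  note [measurable] = Suc
  have "(\<lambda>(a,s). indicator {a<..<c} s * (f s * Tn f c n s)) \<in> borel_measurable (borel \<Otimes>\<^sub>M lborel)"
    unfolding ind_ioo_eq by measurable
  then have "(\<lambda>a. \<integral>\<^sup>+s. indicator {a<..<c} s * (f s * Tn f c n s) \<partial>lborel) \<in> borel_measurable borel"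
    using lborel.borel_measurable_nn_integral[of "\<lambda>a s. indicator {a<..<c} s * (f s * Tn f c n s)" borel]
    by simp
  moreover have "Tn f c (Suc n) = (\<lambda>a. \<integral>\<^sup>+s. indicator {a<..<c} s * (f s * Tn f c n s) \<partial>lborel)"
    by (rule ext) simp
  ultimately show ?case by simp
qed

lemma Tn_fact:
  fixes f :: "real \<Rightarrow> ennreal"
  assumes fm[measurable]: "f \<in> borel_measurable borel"
  shows "fact n * Tn f c n a = (\<integral>\<^sup>+u. indicator {a<..<c} u * f u \<partial>lborel) ^ n"
proof (induction n arbitrary: a)
  case 0 then show ?case by simp
next
  case (Suc n)
  have "fact (Suc n) * Tn f c (Suc n) a = of_nat (Suc n) * (fact n * (\<integral>\<^sup>+s. indicator {a<..<c} s * (f s * Tn f c n s) \<partial>lborel))"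
    by (simp add: fact_Suc ac_simps)
  also have "fact n * (\<integral>\<^sup>+s. indicator {a<..<c} s * (f s * Tn f c n s) \<partial>lborel) = (\<integral>\<^sup>+s. fact n * (indicator {a<..<c} s * (f s * Tn f c n s)) \<partial>lborel)"
    by (rule nn_integral_cmult[symmetric]) (simp del: Tn.simps)
  also have "\<dots> = (\<integral>\<^sup>+s. indicator {a<..<c} s * (f s * (fact n * Tn f c n s)) \<partial>lborel)"
    by (rule nn_integral_cong) (simp add: ac_simps)
  also have "\<dots> = (\<integral>\<^sup>+s. indicator {a<..<c} s * (f s * (\<integral>\<^sup>+u. indicator {s<..<c} u * f u \<partial>lborel) ^ n) \<partial>lborel)"
    by (simp only: Suc)
  finally show ?case using power_identity[OF fm, of a c n] by simp
qed



lemma ceil_approx_lim: "(\<lambda>k. real_of_int \<lceil>s * real (Suc k)\<rceil> / real (Suc k)) \<longlonglongrightarrow> (s::real)"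
proof (rule tendsto_sandwich[of "\<lambda>k. s" _ _ "\<lambda>k. s + inverse (real (Suc k))"])
  show "\<forall>\<^sub>F k in sequentially. s \<le> real_of_int \<lceil>s * real (Suc k)\<rceil> / real (Suc k)"
    by (auto simp: field_simps)
  show "\<forall>\<^sub>F k in sequentially. real_of_int \<lceil>s * real (Suc k)\<rceil> / real (Suc k) \<le> s + inverse (real (Suc k))"
  proof (intro always_eventually allI)
    fix k
    have "real_of_int \<lceil>s * real (Suc k)\<rceil> \<le> s * real (Suc k) + 1" by linarith
    then show "real_of_int \<lceil>s * real (Suc k)\<rceil> / real (Suc k) \<le> s + inverse (real (Suc k))"
      by (simp add: field_simps del: of_nat_Suc)
  qed
  show "(\<lambda>k. s) \<longlonglongrightarrow> s" by simp
  show "(\<lambda>k. s + inverse (real (Suc k))) \<longlonglongrightarrow> s"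
    using tendsto_add[OF tendsto_const LIMSEQ_inverse_real_of_nat, of s] by simp
qed

lemma joint_meas_cont:
  fixes Y :: "real \<Rightarrow> 'w \<Rightarrow> 'b::metric_space"
  assumes Ym: "\<And>s. 0 \<le> s \<Longrightarrow> Y s \<in> borel_measurable M"
    and Yc: "\<And>w. w \<in> space M \<Longrightarrow> continuous_on {0..} (\<lambda>s. Y s w)"
  shows "(\<lambda>(w,s). Y (max 0 s) w) \<in> borel_measurable (M \<Otimes>\<^sub>M borel)"
proof (rule borel_measurable_LIMSEQ_metric)
  fix k :: nat
  let ?g = "\<lambda>(w::'w,s::real). \<lceil>s * real (Suc k)\<rceil>"
  have g: "?g \<in> measurable (M \<Otimes>\<^sub>M borel) (count_space UNIV)"
    by measurable
  have f: "(\<lambda>(w,s). Y (max 0 (real_of_int i / real (Suc k))) w) \<in> borel_measurable (M \<Otimes>\<^sub>M borel)" for i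
    using measurable_compose[OF measurable_fst Ym[of "max 0 (real_of_int i / real (Suc k))"]] by (simp add: split_beta')
  show "(\<lambda>ws. Y (max 0 (real_of_int (?g ws) / real (Suc k))) (fst ws)) \<in> borel_measurable (M \<Otimes>\<^sub>M borel)"
  proof -
    have f': "(\<lambda>ws. Y (max 0 (real_of_int i / real (Suc k))) (fst ws)) \<in> borel_measurable (M \<Otimes>\<^sub>M borel)" if "i \<in> UNIV" for i
      using f[of i] by (simp add: split_beta')
    show ?thesis
      using measurable_compose_countable'[where f="\<lambda>i ws. Y (max 0 (real_of_int i / real (Suc k))) (fst ws)" and I=UNIV, OF f' g countableI_type]
      by (simp add: split_beta')
  qed
next
  fix ws :: "'w \<times> real" assume "ws \<in> space (M \<Otimes>\<^sub>M borel)"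
  then obtain w and s :: real where ws: "ws = (w,s)" "w \<in> space M" by (auto simp: space_pair_measure)
  have lim: "(\<lambda>k. max 0 (real_of_int \<lceil>s * real (Suc k)\<rceil> / real (Suc k))) \<longlonglongrightarrow> max 0 s"
    by (intro tendsto_max tendsto_const ceil_approx_lim)
  have "((\<lambda>u. Y u w) \<longlongrightarrow> Y (max 0 s) w) (at (max 0 s) within {0..})"
    using Yc[OF ws(2)] by (auto simp: continuous_on_def)
  moreover have "((\<lambda>k. max 0 (real_of_int \<lceil>s * real (Suc k)\<rceil> / real (Suc k))) \<longlongrightarrow> max 0 s) (filtermap id sequentially)"
    using lim by simp
  ultimately have "(\<lambda>k. Y (max 0 (real_of_int \<lceil>s * real (Suc k)\<rceil> / real (Suc k))) w) \<longlonglongrightarrow> Y (max 0 s) w"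
    using continuous_on_tendsto_compose[OF Yc[OF ws(2)] lim] by auto
  then show "(\<lambda>k. Y (max 0 (real_of_int (case ws of (w, s) \<Rightarrow> \<lceil>s * real (Suc k)\<rceil>) / real (Suc k))) (fst ws)) \<longlonglongrightarrow> (case ws of (w, s) \<Rightarrow> Y (max 0 s) w)"
    using ws by simp
qed



lemma sigma_sets_aug:
  assumes top: "\<Omega> \<in> S" and emp: "{} \<in> S" and compl: "\<And>A. A \<in> S \<Longrightarrow> \<Omega> - A \<in> S"
    and un: "\<And>A :: nat \<Rightarrow> 'a set. range A \<subseteq> S \<Longrightarrow> (\<Union>i. A i) \<in> S"
    and C: "C \<in> sigma_sets \<Omega> (S \<union> {G})" and G: "G \<subseteq> \<Omega>"
  shows "\<exists>A\<in>S. C \<inter> G = A \<inter> G"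
  using C
proof induction
  case (Basic a)
  then show ?case
    using top G by auto
next
  case Empty
  then show ?case using emp by auto
next
  case (Compl a)
  then obtain A where "A \<in> S" "a \<inter> G = A \<inter> G" by blast
  then show ?case
    using compl[of A] G
    by (intro bexI[of _ "\<Omega> - A"]) auto
next
  case (Union a)
  then obtain A where A: "\<And>i. A i \<in> S \<and> a i \<inter> G = A i \<inter> G" by metis
  then have "range A \<subseteq> S" by auto
  then show ?case
    using A un[of A]
    by (intro bexI[of _ "\<Union>i. A i"]) auto
qed

locale bmd =
  fixes Om :: "'w measure" and Px :: "'w measure" and F :: "real \<Rightarrow> 'w measure"
    and X :: "real \<Rightarrow> 'w \<Rightarrow> real^'d"
    and q :: "real \<Rightarrow> real^'d \<Rightarrow> real^'d \<Rightarrow> real" and b :: "real^'d \<Rightarrow> real"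
    and x :: "real^'d" and G :: "'w set" and t :: real
  assumes filt: "filtration (space Om) F" and Fsub: "\<And>s. sets (F s) \<subseteq> sets Om"
    and prob: "prob_space Px" and setsP: "sets Px = sets Om"
    and Xm: "\<And>s. 0 \<le> s \<Longrightarrow> X s \<in> borel_measurable (F s)"
    and Gsets: "G \<in> sets Om" and Gnull: "emeasure Px (space Om - G) = 0"
    and Gcont: "\<And>w. w \<in> G \<Longrightarrow> continuous_on {0..} (\<lambda>s. X s w)"
    and qpos: "\<And>r y z. 0 < r \<Longrightarrow> 0 \<le> q r y z"
    and qcont: "continuous_on ({0<..} \<times> UNIV \<times> UNIV) (\<lambda>(r, y, z). q r y z)"
    and markov: "\<And>s r A f. 0 \<le> s \<Longrightarrow> 0 < r \<Longrightarrow> A \<in> sets (F s) \<Longrightarrow> f \<in> borel_measurable borel \<Longrightarrow>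
        (\<integral>\<^sup>+ w. indicator A w * f (X (s + r) w) \<partial>Px)
          = (\<integral>\<^sup>+ w. indicator A w * (\<integral>\<^sup>+ y. ennreal (q r (X s w) y) * f y \<partial>lborel) \<partial>Px)"
    and bm: "b \<in> borel_measurable borel" and bnn: "\<And>y. 0 \<le> b y"
    and tpos: "0 < t"
begin

definition "X' s w = (if w \<in> G then X s w else x)"
definition "F' v = sigma (space Om) (sets (F v) \<union> {G})"
definition "Qh r h y = (\<integral>\<^sup>+ z. ennreal (q r y z) * h z \<partial>lborel)"

lemma spaceP: "space Px = space Om" using setsP by (rule sets_eq_imp_space_eq)

lemma spaceF: "space (F s) = space Om" using filt by (simp add: filtration_def)

lemma G_sub: "G \<subseteq> space Om" using Gsets sets.sets_into_space by blast

lemma AE_G: "AE w in Px. w \<in> G"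
proof -
  have "space Om - G \<in> sets Px" using Gsets setsP by auto
  then show ?thesis
    using Gnull by (intro AE_I[of _ _ "space Om - G"]) (auto simp: spaceP)
qed

lemma F_sub_space: "A \<in> sets (F v) \<Longrightarrow> A \<subseteq> space Om"
  using sets.sets_into_space[of A "F v"] spaceF by simp

lemma sets_F': "sets (F' v) = sigma_sets (space Om) (sets (F v) \<union> {G})"
  unfolding F'_def
  by (rule sets_measure_of) (use G_sub F_sub_space in auto)

lemma space_F': "space (F' v) = space Om"
  unfolding F'_def by (rule space_measure_of) (use G_sub F_sub_space in auto)

lemma F'_sub: "sets (F' v) \<subseteq> sets Om"
  unfolding sets_F'
  by (rule sets.sigma_sets_subset) (use Fsub Gsets in auto)

lemma F'_mono: "s \<le> v \<Longrightarrow> sets (F' s) \<subseteq> sets (F' v)"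
  unfolding sets_F'
  by (rule sigma_sets_mono') (use filtration.sets_F_mono[OF filt] in auto)

lemma G_F': "G \<in> sets (F' v)" unfolding sets_F' by auto

lemma F_F': "sets (F v) \<subseteq> sets (F' v)" unfolding sets_F' by auto

lemma meas_F'_P: "f \<in> borel_measurable (F' v) \<Longrightarrow> f \<in> borel_measurable Px"
  using measurable_mono[of borel borel "F' v" Px] F'_sub setsP space_F' spaceP by auto

lemma meas_F_P: "f \<in> borel_measurable (F v) \<Longrightarrow> f \<in> borel_measurable Px"
  using measurable_mono[of borel borel "F v" Px] Fsub setsP spaceF spaceP by auto

lemma meas_F_F': "f \<in> borel_measurable (F v) \<Longrightarrow> f \<in> borel_measurable (F' v)"
  using measurable_mono[of borel borel "F v" "F' v"] F_F' spaceF space_F' by auto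

lemma meas_F'_mono: "s \<le> v \<Longrightarrow> f \<in> borel_measurable (F' s) \<Longrightarrow> f \<in> borel_measurable (F' v)"
  using measurable_mono[of borel borel "F' s" "F' v"] F'_mono space_F' by auto

lemma F'_approx:
  assumes "C \<in> sets (F' v)"
  shows "\<exists>A\<in>sets (F v). C \<inter> G = A \<inter> G"
proof (rule sigma_sets_aug[of "space Om"])
  show "space Om \<in> sets (F v)" using sets.top[of "F v"] spaceF by simp
  show "{} \<in> sets (F v)" by simp
  show "space Om - A \<in> sets (F v)" if "A \<in> sets (F v)" for A
    using sets.compl_sets[OF that] spaceF by simp
  show "(\<Union>i. A i) \<in> sets (F v)" if "range A \<subseteq> sets (F v)" for A :: "nat \<Rightarrow> _"
    using that by auto
  show "C \<in> sigma_sets (space Om) (sets (F v) \<union> {G})" using assms sets_F' by simp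
  show "G \<subseteq> space Om" by (rule G_sub)
qed

lemma X'_meas: "0 \<le> s \<Longrightarrow> X' s \<in> borel_measurable (F' s)"
  unfolding X'_def
  by (rule measurable_If_set) (use meas_F_F'[OF Xm] G_F' space_F' G_sub in \<open>auto simp: Int_absorb2\<close>)

lemma X_meas_P: "0 \<le> s \<Longrightarrow> X s \<in> borel_measurable Px"
  using meas_F_P[OF Xm] .

lemma X'_cont: "continuous_on {0..} (\<lambda>s. X' s w)"
  unfolding X'_def by (cases "w \<in> G") (auto simp: Gcont)

lemma X'_joint: "(\<lambda>(w,s). X' (max 0 s) w) \<in> borel_measurable (Px \<Otimes>\<^sub>M borel)"
  by (rule joint_meas_cont) (auto intro: meas_F'_P X'_meas X'_cont)

end


context bmd begin

lemma q_meas3: "(\<lambda>((r::real,y::real^'d),z::real^'d). ennreal (indicator {0<..} r * q r y z)) \<in> borel_measurable ((borel \<Otimes>\<^sub>M borel) \<Otimes>\<^sub>M borel)"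
proof -
  let ?phi = "\<lambda>p::real \<times> (real^'d) \<times> (real^'d). indicator (({0<..}::real set) \<times> (UNIV :: ((real^'d) \<times> (real^'d)) set)) p *\<^sub>R (case p of (r,y,z) \<Rightarrow> q r y z)"
  have "?phi \<in> borel_measurable borel"
  proof (rule borel_measurable_continuous_on_indicator)
    show "({0<..}::real set) \<times> (UNIV :: ((real^'d) \<times> (real^'d)) set) \<in> sets borel"
      by (intro borel_open open_Times open_greaterThan open_UNIV)
    show "continuous_on (({0<..}::real set) \<times> (UNIV :: ((real^'d) \<times> (real^'d)) set)) (\<lambda>p. case p of (r,y,z) \<Rightarrow> q r y z)"
      using qcont by simp
  qed
  then have 1: "?phi \<in> borel_measurable (borel \<Otimes>\<^sub>M (borel \<Otimes>\<^sub>M borel))"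
    by (simp add: borel_prod)
  have 2: "(\<lambda>p::(real \<times> (real^'d)) \<times> (real^'d). (fst (fst p),(snd (fst p), snd p))) \<in> measurable ((borel \<Otimes>\<^sub>M borel) \<Otimes>\<^sub>M borel) (borel \<Otimes>\<^sub>M (borel \<Otimes>\<^sub>M borel))"
    by measurable
  have "(\<lambda>rz. ?phi ((\<lambda>p::(real \<times> (real^'d)) \<times> (real^'d). (fst (fst p),(snd (fst p), snd p))) rz)) \<in> borel_measurable ((borel \<Otimes>\<^sub>M borel) \<Otimes>\<^sub>M borel)"
    by (rule measurable_compose[OF 2 1])
  then have "(\<lambda>((r::real,y::real^'d),z::real^'d). indicator {0<..} r * q r y z) \<in> borel_measurable ((borel \<Otimes>\<^sub>M borel) \<Otimes>\<^sub>M borel)"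
    by (simp add: split_beta' indicator_def)
  from measurable_compose[OF this measurable_ennreal] show ?thesis by (simp add: split_beta')
qed

lemma Qh_joint:
  assumes hm[measurable]: "h \<in> borel_measurable borel"
  shows "(\<lambda>(r,y). indicator {0<..} r * Qh r h y) \<in> borel_measurable (borel \<Otimes>\<^sub>M borel)"
proof -
  have "(\<lambda>((r::real,y::real^'d),z::real^'d). ennreal (indicator {0<..} r * q r y z) * h z) \<in> borel_measurable ((borel \<Otimes>\<^sub>M borel) \<Otimes>\<^sub>M lborel)"
    using q_meas3 by (simp add: split_beta') measurable
  then have "(\<lambda>(r,y). \<integral>\<^sup>+z. ennreal (indicator {0<..} r * q r y z) * h z \<partial>lborel) \<in> borel_measurable (borel \<Otimes>\<^sub>M borel)"
    using lborel.borel_measurable_nn_integral[of "\<lambda>(r,y) z. ennreal (indicator {0<..} r * q r y z) * h z" "borel \<Otimes>\<^sub>M borel"]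
    by (simp add: split_beta')
  moreover have "(\<lambda>(r,y). \<integral>\<^sup>+z. ennreal (indicator {0<..} r * q r y z) * h z \<partial>lborel) = (\<lambda>(r,y). indicator {0<..} r * Qh r h y)"
    by (auto simp: Qh_def fun_eq_iff indicator_def)
  ultimately show ?thesis by simp
qed

lemma Qh_meas:
  assumes hm: "h \<in> borel_measurable borel" and r: "0 < r"
  shows "Qh r h \<in> borel_measurable borel"
proof -
  have "(\<lambda>y. indicator {0<..} r * Qh r h y) \<in> borel_measurable borel"
    using measurable_Pair2[OF Qh_joint[OF hm], of r] by simp
  then show ?thesis using r by simp
qed

lemma markov_ext:
  assumes v: "0 \<le> v" and r: "0 < r" and Z: "Z \<in> borel_measurable (F' v)" and hm: "h \<in> borel_measurable borel"
  shows "(\<integral>\<^sup>+w. Z w * h (X (v + r) w) \<partial>Px) = (\<integral>\<^sup>+w. Z w * Qh r h (X v w) \<partial>Px)"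
proof -
  have hX[measurable]: "(\<lambda>w. h (X (v + r) w)) \<in> borel_measurable Px"
    using measurable_compose[OF X_meas_P hm] v r by simp
  have hX'[measurable]: "(\<lambda>w. h (X (r + v) w)) \<in> borel_measurable Px"
    using hX by (simp add: add.commute)
  have QX[measurable]: "(\<lambda>w. Qh r h (X v w)) \<in> borel_measurable Px"
    using measurable_compose[OF X_meas_P Qh_meas[OF hm r]] v by simp
  show ?thesis
  using Z
  proof (induction rule: borel_measurable_induct)
    case (cong f g)
    have "(\<integral>\<^sup>+w. f w * h (X (v + r) w) \<partial>Px) = (\<integral>\<^sup>+w. g w * h (X (v + r) w) \<partial>Px)"
      by (rule nn_integral_cong) (simp add: cong spaceP space_F')
    moreover have "(\<integral>\<^sup>+w. f w * Qh r h (X v w) \<partial>Px) = (\<integral>\<^sup>+w. g w * Qh r h (X v w) \<partial>Px)"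
      by (rule nn_integral_cong) (simp add: cong spaceP space_F')
    ultimately show ?case using cong by simp
  next
    case (set A)
    then obtain B where B: "B \<in> sets (F v)" "A \<inter> G = B \<inter> G" using F'_approx by blast
    have AB: "AE w in Px. indicator A w = (indicator B w :: ennreal)"
      using AE_G by eventually_elim (use B in \<open>auto simp: indicator_def\<close>)
    have "(\<integral>\<^sup>+w. indicator A w * h (X (v + r) w) \<partial>Px) = (\<integral>\<^sup>+w. indicator B w * h (X (v + r) w) \<partial>Px)"
      by (rule nn_integral_cong_AE) (use AB in eventually_elim, auto)
    also have "\<dots> = (\<integral>\<^sup>+w. indicator B w * Qh r h (X v w) \<partial>Px)"
      unfolding Qh_def by (rule markov[OF v r B(1) hm])
    also have "\<dots> = (\<integral>\<^sup>+w. indicator A w * Qh r h (X v w) \<partial>Px)"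
      by (rule nn_integral_cong_AE) (use AB in eventually_elim, auto)
    finally show ?case .
  next
    case (mult u c)
    have um: "u \<in> borel_measurable Px" using mult meas_F'_P by blast
    have "(\<integral>\<^sup>+w. c * u w * h (X (v + r) w) \<partial>Px) = c * (\<integral>\<^sup>+w. u w * h (X (v + r) w) \<partial>Px)"
      using um by (subst nn_integral_cmult[symmetric]) (auto simp: ac_simps)
    moreover have "(\<integral>\<^sup>+w. c * u w * Qh r h (X v w) \<partial>Px) = c * (\<integral>\<^sup>+w. u w * Qh r h (X v w) \<partial>Px)"
      using um by (subst nn_integral_cmult[symmetric]) (auto simp: ac_simps)
    ultimately show ?case using mult by simp
  next
    case (add u w')
    have um: "u \<in> borel_measurable Px" "w' \<in> borel_measurable Px" using add meas_F'_P by blast+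
    have "(\<integral>\<^sup>+w. (w' w + u w) * h (X (v + r) w) \<partial>Px) = (\<integral>\<^sup>+w. w' w * h (X (v + r) w) \<partial>Px) + (\<integral>\<^sup>+w. u w * h (X (v + r) w) \<partial>Px)"
      using um by (simp add: distrib_right nn_integral_add)
    moreover have "(\<integral>\<^sup>+w. (w' w + u w) * Qh r h (X v w) \<partial>Px) = (\<integral>\<^sup>+w. w' w * Qh r h (X v w) \<partial>Px) + (\<integral>\<^sup>+w. u w * Qh r h (X v w) \<partial>Px)"
      using um by (simp add: distrib_right nn_integral_add)
    ultimately show ?case using add by simp
  next
    case (seq U)
    have um: "\<And>i. U i \<in> borel_measurable Px" using seq meas_F'_P by blast
    have inc: "incseq (\<lambda>i w. U i w * k w)" for k :: "'w \<Rightarrow> ennreal"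
      using seq by (auto simp: incseq_def le_fun_def intro!: mult_right_mono)
    have e: "(SUP i. U i) w * k w = (SUP i. U i w * k w)" for w and k :: "'w \<Rightarrow> ennreal"
      by (simp add: SUP_mult_right_ennreal image_comp)
    have "(\<integral>\<^sup>+w. (SUP i. U i) w * h (X (v + r) w) \<partial>Px) = (\<integral>\<^sup>+w. (SUP i. U i w * h (X (v + r) w)) \<partial>Px)"
      by (rule nn_integral_cong) (rule e)
    also have "\<dots> = (SUP i. \<integral>\<^sup>+w. U i w * h (X (v + r) w) \<partial>Px)"
      using um by (intro nn_integral_monotone_convergence_SUP[OF inc[of "\<lambda>w. h (X (v + r) w)"]]) auto
    finally have 1: "(\<integral>\<^sup>+w. (SUP i. U i) w * h (X (v + r) w) \<partial>Px) = (SUP i. \<integral>\<^sup>+w. U i w * h (X (v + r) w) \<partial>Px)" .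
    have "(\<integral>\<^sup>+w. (SUP i. U i) w * Qh r h (X v w) \<partial>Px) = (\<integral>\<^sup>+w. (SUP i. U i w * Qh r h (X v w)) \<partial>Px)"
      by (rule nn_integral_cong) (rule e)
    also have "\<dots> = (SUP i. \<integral>\<^sup>+w. U i w * Qh r h (X v w) \<partial>Px)"
      using um by (intro nn_integral_monotone_convergence_SUP[OF inc[of "\<lambda>w. Qh r h (X v w)"]]) auto
    finally have 2: "(\<integral>\<^sup>+w. (SUP i. U i) w * Qh r h (X v w) \<partial>Px) = (SUP i. \<integral>\<^sup>+w. U i w * Qh r h (X v w) \<partial>Px)" .
    show ?case using seq 1 2 by simp
  qed
qed

end


lemma theta_ineq:
  fixes th :: real assumes "0 \<le> th" "th \<le> 1"
  shows "real (Suc n) * th * (1 - th) ^ n \<le> 1"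
proof -
  have b: "1 + real n * th \<le> (1 + th) ^ n"
    using Bernoulli_inequality[of th n] assms by simp
  have "(1 - th) ^ n * (1 + th) ^ n = (1 - th^2) ^ n"
    by (simp add: power_mult_distrib[symmetric] power2_eq_square algebra_simps)
  also have "\<dots> \<le> 1" using assms by (intro power_le_one) (auto simp: power_le_one)
  finally have c: "(1 - th) ^ n * (1 + th) ^ n \<le> 1" .
  have "real (Suc n) * th * (1 - th) ^ n \<le> (1 + real n * th) * (1 - th) ^ n"
    using assms by (intro mult_right_mono) (auto simp: algebra_simps)
  also have "\<dots> \<le> (1 + th) ^ n * (1 - th) ^ n"
    using assms b by (intro mult_right_mono) auto
  finally show ?thesis using c by (simp add: mult.commute)
qed

lemma sqrt_bound:
  fixes u R :: real assumes "0 < u" "u < R"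
  shows "sqrt (R - u) ^ n \<le> sqrt R ^ Suc n / sqrt (real (Suc n)) * inverse (sqrt u)"
proof -
  define th where "th = u / R"
  have R: "0 < R" using assms by simp
  have th: "0 \<le> th" "th \<le> 1" using assms by (auto simp: th_def)
  have "real (Suc n) * th * (1 - th) ^ n \<le> 1" by (rule theta_ineq[OF th])
  then have "real (Suc n) * th * (1 - th) ^ n * R ^ Suc n \<le> R ^ Suc n"
    using R by (simp add: mult_le_cancel_right1)
  moreover have "real (Suc n) * th * (1 - th) ^ n * R ^ Suc n = real (Suc n) * u * (R - u) ^ n"
  proof -
    have "(1 - th) ^ n * R ^ n = (R - u) ^ n"
      using R by (simp add: th_def power_mult_distrib[symmetric] field_simps)
    then have e: "th * ((1 - th) ^ n * R ^ Suc n) = u * (R - u) ^ n"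
      using R by (simp add: th_def field_simps)
    have "real (Suc n) * th * (1 - th) ^ n * R ^ Suc n = real (Suc n) * (th * ((1 - th) ^ n * R ^ Suc n))"
      by (simp only: mult.assoc)
    then show ?thesis using e by simp
  qed
  ultimately have key: "real (Suc n) * u * (R - u) ^ n \<le> R ^ Suc n" by linarith
  have "sqrt (R - u) ^ n = sqrt ((R - u) ^ n)" by (simp add: real_sqrt_power)
  also have "\<dots> \<le> sqrt (R ^ Suc n / (real (Suc n) * u))"
  proof (intro real_sqrt_le_mono)
    have pos: "0 < real (Suc n) * u" using assms by simp
    have "(R - u) ^ n * (real (Suc n) * u) \<le> R ^ Suc n"
      using key by (simp only: mult.commute mult.left_commute)
    then show "(R - u) ^ n \<le> R ^ Suc n / (real (Suc n) * u)"
      by (subst pos_le_divide_eq[OF pos])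
  qed
  also have "\<dots> = sqrt (R ^ Suc n) / (sqrt (real (Suc n)) * sqrt u)"
    by (simp only: real_sqrt_divide real_sqrt_mult)
  also have "\<dots> = sqrt R ^ Suc n / sqrt (real (Suc n)) * inverse (sqrt u)"
    by (simp only: real_sqrt_power divide_inverse inverse_mult_distrib mult.assoc)
  finally show ?thesis .
qed



context bmd begin

definition "bb z = ennreal (b z)"
definition "Qp r y = indicator {0<..} r * Qh r bb y"
definition "Lam = Lambda_fun q t b"

lemma bb_meas[measurable]: "bb \<in> borel_measurable borel"
  unfolding bb_def using bm by measurable

lemma Qp_joint: "(\<lambda>(r,y). Qp r y) \<in> borel_measurable (borel \<Otimes>\<^sub>M borel)"
  unfolding Qp_def using Qh_joint[OF bb_meas] .

lemma Qp_pos: "0 < r \<Longrightarrow> Qp r y = Qh r bb y"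
  by (simp add: Qp_def)

lemma q_meas_z: "0 < u \<Longrightarrow> (\<lambda>z. ennreal (q u y z)) \<in> borel_measurable borel"
proof -
  assume u: "0 < u"
  have "(\<lambda>z. ennreal (indicator {0<..} u * q u y z)) \<in> borel_measurable borel"
    using measurable_Pair2[OF q_meas3, of "(u,y)"] by (simp add: space_pair_measure)
  then show ?thesis using u by simp
qed

lemma Lam_term:
  assumes u: "0 < u"
  shows "ennreal (inverse (sqrt u)) * Qp u y = (\<integral>\<^sup>+ z. ennreal (u powr (-1/2) * q u y z) \<partial>density lborel (\<lambda>z. ennreal \<bar>b z\<bar>))"
proof -
  have bm': "(\<lambda>z. ennreal \<bar>b z\<bar>) \<in> borel_measurable lborel"
    using measurable_compose[OF borel_measurable_abs[OF bm] measurable_ennreal] by simp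
  have gm: "(\<lambda>z. ennreal (u powr (-1/2) * q u y z)) \<in> borel_measurable lborel"
  proof -
    have "(\<lambda>z. ennreal (q u y z)) \<in> borel_measurable borel" by (rule q_meas_z[OF u])
    then have mm: "(\<lambda>z. ennreal (u powr (-1/2)) * ennreal (q u y z)) \<in> borel_measurable borel"
      by (intro borel_measurable_times_ennreal measurable_const) simp_all
    have e: "(\<lambda>z. ennreal (u powr (-1/2)) * ennreal (q u y z)) = (\<lambda>z. ennreal (u powr (-1/2) * q u y z))"
      by (intro ext ennreal_mult[symmetric]) (simp_all add: qpos[OF u])
    show ?thesis using mm unfolding e measurable_lborel2 .
  qed
  have "(\<integral>\<^sup>+ z. ennreal (u powr (-1/2) * q u y z) \<partial>density lborel (\<lambda>z. ennreal \<bar>b z\<bar>))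
      = (\<integral>\<^sup>+ z. ennreal \<bar>b z\<bar> * ennreal (u powr (-1/2) * q u y z) \<partial>lborel)"
    by (rule nn_integral_density[OF bm' gm])
  also have "\<dots> = (\<integral>\<^sup>+ z. ennreal (inverse (sqrt u)) * (ennreal (q u y z) * bb z) \<partial>lborel)"
  proof (intro nn_integral_cong)
    fix z
    have p: "u powr (-1/2) = inverse (sqrt u)"
    proof -
      have "u powr (-1/2) = u powr (- (1/2))" by simp
      also have "\<dots> = inverse (sqrt u)" using u by (simp only: powr_minus powr_half_sqrt less_imp_le)
      finally show ?thesis .
    qed
    have i0: "0 \<le> inverse (sqrt u)" using u by simp
    have q0: "0 \<le> q u y z" using qpos[OF u] .
    have b0: "0 \<le> b z" using bnn .
    have "ennreal \<bar>b z\<bar> * ennreal (u powr (-1/2) * q u y z) = ennreal (b z) * (ennreal (inverse (sqrt u)) * ennreal (q u y z))"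
      by (simp only: p abs_of_nonneg[OF b0] ennreal_mult[OF i0 q0])
    also have "\<dots> = ennreal (inverse (sqrt u)) * (ennreal (q u y z) * bb z)"
      by (simp add: bb_def mult_ac)
    finally show "ennreal \<bar>b z\<bar> * ennreal (u powr (-1/2) * q u y z) = ennreal (inverse (sqrt u)) * (ennreal (q u y z) * bb z)" .
  qed
  also have "\<dots> = ennreal (inverse (sqrt u)) * Qh u bb y"
    unfolding Qh_def using q_meas_z[OF u] bb_meas by (intro nn_integral_cmult borel_measurable_times_ennreal) simp_all
  finally show ?thesis using u by (simp add: Qp_pos)
qed

lemma Lam_bound:
  "(\<integral>\<^sup>+u. indicator {0<..t} u * (ennreal (inverse (sqrt u)) * Qp u y) \<partial>lborel) \<le> Lam"
proof -
  have "(\<integral>\<^sup>+u. indicator {0<..t} u * (ennreal (inverse (sqrt u)) * Qp u y) \<partial>lborel)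
     = (\<integral>\<^sup>+ u\<in>{0<..t}. (\<integral>\<^sup>+ z. ennreal (u powr (-1/2) * q u y z) \<partial>density lborel (\<lambda>z. ennreal \<bar>b z\<bar>)) \<partial>lborel)"
    by (intro nn_integral_cong) (auto simp: Lam_term indicator_def)
  also have "\<dots> \<le> Lam"
    unfolding Lam_def Lambda_fun_def Lambda_def by (rule SUP_upper) simp
  finally show ?thesis .
qed

lemma PW:
  assumes ac: "a < c" and ct: "c - a \<le> t"
  shows "(\<integral>\<^sup>+s. indicator {a<..<c} s * (ennreal (sqrt (c - s) ^ n) * Qp (s - a) y) \<partial>lborel)
     \<le> ennreal (sqrt (c - a) ^ Suc n / sqrt (real (Suc n))) * Lam"
proof -
  define K where "K = sqrt (c - a) ^ Suc n / sqrt (real (Suc n))"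
  have K0: "0 \<le> K" unfolding K_def using ac by simp
  define g where "g = (\<lambda>u. indicator {0<..t} u * (ennreal (inverse (sqrt u)) * Qp u y))"
  have gm: "g \<in> borel_measurable borel"
  proof -
    have "(\<lambda>u. Qp u y) \<in> borel_measurable borel"
      using measurable_Pair1[OF Qp_joint, of y] by simp
    then show ?thesis unfolding g_def
      by (intro borel_measurable_times_ennreal borel_measurable_indicator measurable_compose[OF _ measurable_ennreal]
          borel_measurable_inverse borel_measurable_sqrt) simp_all
  qed
  have sh: "(\<lambda>s::real. s - a) \<in> borel_measurable borel" by simp
  have gam: "(\<lambda>s. g (s - a)) \<in> borel_measurable borel"
    using measurable_compose[OF sh gm] by simp
  have gam': "(\<lambda>s. g (s - a)) \<in> borel_measurable lborel"
    using gam by simp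
  have "(\<integral>\<^sup>+s. indicator {a<..<c} s * (ennreal (sqrt (c - s) ^ n) * Qp (s - a) y) \<partial>lborel)
      \<le> (\<integral>\<^sup>+s. ennreal K * g (s - a) \<partial>lborel)"
  proof (rule nn_integral_mono)
    fix s
    show "indicator {a<..<c} s * (ennreal (sqrt (c - s) ^ n) * Qp (s - a) y) \<le> ennreal K * g (s - a)"
    proof (cases "a < s \<and> s < c")
      case True
      then have le: "sqrt (c - s) ^ n \<le> K * inverse (sqrt (s - a))"
        using sqrt_bound[of "s - a" "c - a" n] by (simp add: K_def)
      have "ennreal (sqrt (c - s) ^ n) * Qp (s - a) y \<le> ennreal (K * inverse (sqrt (s - a))) * Qp (s - a) y"
        by (intro mult_right_mono ennreal_leI le) simp
      also have "\<dots> = ennreal K * (ennreal (inverse (sqrt (s - a))) * Qp (s - a) y)"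
        using True K0 by (simp add: ennreal_mult mult.assoc)
      finally show ?thesis using True ct by (simp add: g_def)
    qed simp
  qed
  also have "(\<integral>\<^sup>+s. ennreal K * g (s - a) \<partial>lborel) = ennreal K * (\<integral>\<^sup>+s. g (s - a) \<partial>lborel)"
    by (rule nn_integral_cmult[OF gam'])
  also have "(\<integral>\<^sup>+s. g (s - a) \<partial>lborel) = (\<integral>\<^sup>+u. g u \<partial>lborel)"
    using nn_integral_real_affine[OF gam, of 1 a] by simp
  also have "ennreal K * (\<integral>\<^sup>+u. g u \<partial>lborel) \<le> ennreal K * Lam"
    unfolding g_def by (intro mult_left_mono Lam_bound) simp
  finally show ?thesis
    unfolding K_def .
qed

end


context bmd begin

definition "fw w s = bb (X' (max 0 s) w)"

lemma PL: "pair_sigma_finite Px lborel"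
proof -
  interpret P: prob_space Px by (rule prob)
  show ?thesis
    by (intro pair_sigma_finite.intro P.sigma_finite_measure_axioms sigma_finite_lborel)
qed

lemma sets_PL: "sets (Px \<Otimes>\<^sub>M lborel) = sets (Px \<Otimes>\<^sub>M borel)"
  by (rule sets_pair_measure_cong) simp_all

lemma fw_joint: "(\<lambda>(w,s). fw w s) \<in> borel_measurable (Px \<Otimes>\<^sub>M lborel)"
proof -
  have "(\<lambda>p. bb ((\<lambda>(w,s). X' (max 0 s) w) p)) \<in> borel_measurable (Px \<Otimes>\<^sub>M borel)"
    by (rule measurable_compose[OF X'_joint bb_meas])
  then show ?thesis
    unfolding measurable_cong_sets[OF sets_PL refl] by (simp add: fw_def split_beta')
qed

lemma Tn_fw_joint: "(\<lambda>(w,a). Tn (fw w) c n a) \<in> borel_measurable (Px \<Otimes>\<^sub>M lborel)"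
proof -
  have "(\<lambda>(w,s). fw w s) \<in> borel_measurable (Px \<Otimes>\<^sub>M borel)"
    using fw_joint unfolding measurable_cong_sets[OF sets_PL refl] .
  from Tn_joint_meas[OF this] show ?thesis
    unfolding measurable_cong_sets[OF sets_PL refl] .
qed

lemma fw_F': "0 \<le> s \<Longrightarrow> (\<lambda>w. fw w s) \<in> borel_measurable (F' s)"
  unfolding fw_def using measurable_compose[OF X'_meas bb_meas] by simp

lemma Qp_X: "(\<lambda>w. Qp r (X a w)) \<in> borel_measurable Px" if "0 \<le> a"
proof -
  have "(\<lambda>y. Qp r y) \<in> borel_measurable borel"
    using measurable_Pair2[OF Qp_joint, of r] by simp
  from measurable_compose[OF X_meas_P[OF that] this] show ?thesis .
qed

lemma Qp_X_joint: "(\<lambda>(w,s). Qp (s - a) (X a w)) \<in> borel_measurable (Px \<Otimes>\<^sub>M lborel)" if "0 \<le> a"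
proof -
  have m: "(\<lambda>p. (snd p - a, X a (fst p))) \<in> measurable (Px \<Otimes>\<^sub>M lborel) (borel \<Otimes>\<^sub>M borel)"
  proof (rule measurable_Pair)
    show "(\<lambda>p. snd p - a) \<in> borel_measurable (Px \<Otimes>\<^sub>M lborel)" by measurable
    show "(\<lambda>p. X a (fst p)) \<in> borel_measurable (Px \<Otimes>\<^sub>M lborel)"
      by (rule measurable_compose[OF measurable_fst X_meas_P[OF that]])
  qed
  from measurable_compose[OF m Qp_joint] show ?thesis by (simp add: split_beta')
qed

lemma const_eq:
  assumes "a < c"
  shows "ennreal (1 / sqrt (fact n)) * ennreal (sqrt (c - a) ^ Suc n / sqrt (real (Suc n)))
       = ennreal (sqrt (c - a) ^ Suc n / sqrt (fact (Suc n)))"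
proof -
  have "ennreal (1 / sqrt (fact n)) * ennreal (sqrt (c - a) ^ Suc n / sqrt (real (Suc n)))
      = ennreal (1 / sqrt (fact n) * (sqrt (c - a) ^ Suc n / sqrt (real (Suc n))))"
    using assms by (intro ennreal_mult[symmetric]) simp_all
  also have "1 / sqrt (fact n) * (sqrt (c - a) ^ Suc n / sqrt (real (Suc n))) = sqrt (c - a) ^ Suc n / sqrt (fact (Suc n))"
  proof -
    have "sqrt (fact (Suc n) :: real) = sqrt (real (Suc n)) * sqrt (fact n)"
      by (simp only: fact_Suc of_nat_mult real_sqrt_mult of_nat_fact)
    then show ?thesis by simp
  qed
  finally show ?thesis .
qed

lemma key:
  assumes "0 \<le> a" "a \<le> c" "c - a \<le> t" "Z \<in> borel_measurable (F' a)"
  shows "(\<integral>\<^sup>+w. Z w * Tn (fw w) c n a \<partial>Px) \<le> Lam ^ n * ennreal (sqrt (c - a) ^ n / sqrt (fact n)) * (\<integral>\<^sup>+w. Z w \<partial>Px)"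
  using assms
proof (induction n arbitrary: a Z)
  case 0
  then show ?case by simp
next
  case (Suc n)
  note a0 = Suc.prems(1) and ac = Suc.prems(2) and ct = Suc.prems(3) and Zm' = Suc.prems(4)
  interpret PL: pair_sigma_finite Px lborel by (rule PL)
  have Zm[measurable]: "Z \<in> borel_measurable Px" using meas_F'_P[OF Zm'] .
  show ?case
  proof (cases "a = c")
    case True
    then show ?thesis by simp
  next
    case False
    then have ac': "a < c" using ac by simp
    define C where "C = Lam ^ n * ennreal (1 / sqrt (fact n))"
    define e where "e = (\<lambda>s. ennreal (sqrt (c - s) ^ n))"
    define K where "K = sqrt (c - a) ^ Suc n / sqrt (real (Suc n))"
    have em[measurable]: "e \<in> borel_measurable borel" unfolding e_def by measurable
    have fwj[measurable]: "(\<lambda>p. fw (fst p) (snd p)) \<in> borel_measurable (Px \<Otimes>\<^sub>M lborel)"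
      using fw_joint by (simp add: split_beta')
    have Tnj[measurable]: "(\<lambda>p. Tn (fw (fst p)) c n (snd p)) \<in> borel_measurable (Px \<Otimes>\<^sub>M lborel)"
      using Tn_fw_joint[of c n] by (simp add: split_beta')
    have Qj[measurable]: "(\<lambda>p. Qp (snd p - a) (X a (fst p))) \<in> borel_measurable (Px \<Otimes>\<^sub>M lborel)"
      using Qp_X_joint[OF a0] by (simp add: split_beta')
    have J1: "(\<lambda>p. Z (fst p) * (indicator {a<..<c} (snd p) * (fw (fst p) (snd p) * Tn (fw (fst p)) c n (snd p)))) \<in> borel_measurable (Px \<Otimes>\<^sub>M lborel)"
      by measurable
    have J2: "(\<lambda>p. C * (Z (fst p) * (indicator {a<..<c} (snd p) * (e (snd p) * Qp (snd p - a) (X a (fst p)))))) \<in> borel_measurable (Px \<Otimes>\<^sub>M lborel)"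
      by measurable
    have J3: "(\<lambda>p. indicator {a<..<c} (snd p) * (e (snd p) * Qp (snd p - a) (X a (fst p)))) \<in> borel_measurable (Px \<Otimes>\<^sub>M lborel)"
      by measurable
    have J0: "(\<lambda>p. indicator {a<..<c} (snd p) * (fw (fst p) (snd p) * Tn (fw (fst p)) c n (snd p))) \<in> borel_measurable (Px \<Otimes>\<^sub>M lborel)"
      by measurable
    have "(\<integral>\<^sup>+w. Z w * Tn (fw w) c (Suc n) a \<partial>Px)
        = (\<integral>\<^sup>+w. \<integral>\<^sup>+s. Z w * (indicator {a<..<c} s * (fw w s * Tn (fw w) c n s)) \<partial>lborel \<partial>Px)"
    proof (rule nn_integral_cong)
      fix w assume w: "w \<in> space Px"
      have "(\<lambda>s. indicator {a<..<c} s * (fw w s * Tn (fw w) c n s)) \<in> borel_measurable lborel"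
        using measurable_Pair2[OF J0 w] by simp
      then show "Z w * Tn (fw w) c (Suc n) a = (\<integral>\<^sup>+s. Z w * (indicator {a<..<c} s * (fw w s * Tn (fw w) c n s)) \<partial>lborel)"
        unfolding Tn.simps by (rule nn_integral_cmult[symmetric])
    qed
    also have "\<dots> = (\<integral>\<^sup>+s. \<integral>\<^sup>+w. Z w * (indicator {a<..<c} s * (fw w s * Tn (fw w) c n s)) \<partial>Px \<partial>lborel)"
      by (rule PL.Fubini'[symmetric]) (use J1 in \<open>simp add: split_beta'\<close>)
    also have "\<dots> \<le> (\<integral>\<^sup>+s. \<integral>\<^sup>+w. C * (Z w * (indicator {a<..<c} s * (e s * Qp (s - a) (X a w)))) \<partial>Px \<partial>lborel)"
    proof (rule nn_integral_mono)
      fix s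
      show "(\<integral>\<^sup>+w. Z w * (indicator {a<..<c} s * (fw w s * Tn (fw w) c n s)) \<partial>Px)
          \<le> (\<integral>\<^sup>+w. C * (Z w * (indicator {a<..<c} s * (e s * Qp (s - a) (X a w)))) \<partial>Px)"
      proof (cases "a < s \<and> s < c")
        case False
        then show ?thesis by simp
      next
        case True
        have s0: "0 \<le> s" "s \<le> c" "c - s \<le> t" using True a0 ct by auto
        have Z's: "(\<lambda>w. Z w * fw w s) \<in> borel_measurable (F' s)"
          using meas_F'_mono[OF _ Zm', of s] fw_F'[OF s0(1)] True
          by (intro borel_measurable_times_ennreal) auto
        have IH: "(\<integral>\<^sup>+w. (Z w * fw w s) * Tn (fw w) c n s \<partial>Px) \<le> Lam ^ n * ennreal (sqrt (c - s) ^ n / sqrt (fact n)) * (\<integral>\<^sup>+w. Z w * fw w s \<partial>Px)"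
          by (rule Suc.IH[OF s0 Z's])
        have mk: "(\<integral>\<^sup>+w. Z w * fw w s \<partial>Px) = (\<integral>\<^sup>+w. Z w * Qp (s - a) (X a w) \<partial>Px)"
        proof -
          have "(\<integral>\<^sup>+w. Z w * fw w s \<partial>Px) = (\<integral>\<^sup>+w. Z w * bb (X (a + (s - a)) w) \<partial>Px)"
          proof (rule nn_integral_cong_AE)
            show "AE w in Px. Z w * fw w s = Z w * bb (X (a + (s - a)) w)"
              using AE_G by eventually_elim (use s0 in \<open>auto simp: fw_def X'_def\<close>)
          qed
          also have "\<dots> = (\<integral>\<^sup>+w. Z w * Qh (s - a) bb (X a w) \<partial>Px)"
            by (rule markov_ext[OF a0 _ Zm' bb_meas]) (use True in simp)
          also have "\<dots> = (\<integral>\<^sup>+w. Z w * Qp (s - a) (X a w) \<partial>Px)"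
            using True by (simp add: Qp_pos)
          finally show ?thesis .
        qed
        have L: "(\<integral>\<^sup>+w. Z w * (indicator {a<..<c} s * (fw w s * Tn (fw w) c n s)) \<partial>Px) = (\<integral>\<^sup>+w. (Z w * fw w s) * Tn (fw w) c n s \<partial>Px)"
          using True by (intro nn_integral_cong) (simp add: mult.assoc)
        have Ce: "C * e s = Lam ^ n * ennreal (sqrt (c - s) ^ n / sqrt (fact n))"
        proof -
          have "ennreal (1 / sqrt (fact n)) * ennreal (sqrt (c - s) ^ n) = ennreal (sqrt (c - s) ^ n / sqrt (fact n))"
            using s0 by (subst ennreal_mult[symmetric]) simp_all
          then show ?thesis by (simp add: C_def e_def mult.assoc)
        qed
        have R: "(\<integral>\<^sup>+w. C * (Z w * (indicator {a<..<c} s * (e s * Qp (s - a) (X a w)))) \<partial>Px) = (C * e s) * (\<integral>\<^sup>+w. Z w * Qp (s - a) (X a w) \<partial>Px)"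
        proof -
          have "(\<integral>\<^sup>+w. C * (Z w * (indicator {a<..<c} s * (e s * Qp (s - a) (X a w)))) \<partial>Px) = (\<integral>\<^sup>+w. (C * e s) * (Z w * Qp (s - a) (X a w)) \<partial>Px)"
            using True by (intro nn_integral_cong) (simp add: mult_ac)
          also have "\<dots> = (C * e s) * (\<integral>\<^sup>+w. Z w * Qp (s - a) (X a w) \<partial>Px)"
            using Qp_X[OF a0] by (intro nn_integral_cmult borel_measurable_times_ennreal Zm)
          finally show ?thesis .
        qed
        show ?thesis unfolding L R Ce using IH mk by simp
      qed
    qed
    also have "\<dots> = (\<integral>\<^sup>+w. \<integral>\<^sup>+s. C * (Z w * (indicator {a<..<c} s * (e s * Qp (s - a) (X a w)))) \<partial>lborel \<partial>Px)"
      by (rule PL.Fubini') (use J2 in \<open>simp add: split_beta'\<close>)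
    also have "\<dots> = (\<integral>\<^sup>+w. (C * Z w) * (\<integral>\<^sup>+s. indicator {a<..<c} s * (e s * Qp (s - a) (X a w)) \<partial>lborel) \<partial>Px)"
    proof (rule nn_integral_cong)
      fix w assume w: "w \<in> space Px"
      have "(\<lambda>s. indicator {a<..<c} s * (e s * Qp (s - a) (X a w))) \<in> borel_measurable lborel"
        using measurable_Pair2[OF J3 w] by simp
      then show "(\<integral>\<^sup>+s. C * (Z w * (indicator {a<..<c} s * (e s * Qp (s - a) (X a w)))) \<partial>lborel) = (C * Z w) * (\<integral>\<^sup>+s. indicator {a<..<c} s * (e s * Qp (s - a) (X a w)) \<partial>lborel)"
        by (subst nn_integral_cmult[symmetric]) (simp_all add: mult.assoc)
    qed
    also have "\<dots> \<le> (\<integral>\<^sup>+w. (C * Z w) * (ennreal K * Lam) \<partial>Px)"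
    proof (rule nn_integral_mono)
      fix w
      show "(C * Z w) * (\<integral>\<^sup>+s. indicator {a<..<c} s * (e s * Qp (s - a) (X a w)) \<partial>lborel) \<le> (C * Z w) * (ennreal K * Lam)"
        using PW[OF ac' ct, of n "X a w"] by (intro mult_left_mono) (simp_all add: e_def K_def)
    qed
    also have "\<dots> = (C * (ennreal K * Lam)) * (\<integral>\<^sup>+w. Z w \<partial>Px)"
    proof -
      have "(\<integral>\<^sup>+w. (C * Z w) * (ennreal K * Lam) \<partial>Px) = (\<integral>\<^sup>+w. (C * (ennreal K * Lam)) * Z w \<partial>Px)"
        by (intro nn_integral_cong) (simp add: mult_ac)
      also have "\<dots> = (C * (ennreal K * Lam)) * (\<integral>\<^sup>+w. Z w \<partial>Px)"
        by (rule nn_integral_cmult[OF Zm])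
      finally show ?thesis .
    qed
    also have "C * (ennreal K * Lam) = Lam ^ Suc n * ennreal (sqrt (c - a) ^ Suc n / sqrt (fact (Suc n)))"
    proof -
      have "C * (ennreal K * Lam) = (Lam * Lam ^ n) * (ennreal (1 / sqrt (fact n)) * ennreal K)"
        by (simp only: C_def mult_ac)
      also have "\<dots> = Lam ^ Suc n * ennreal (sqrt (c - a) ^ Suc n / sqrt (fact (Suc n)))"
        unfolding K_def const_eq[OF ac'] by (simp only: power_Suc)
      finally show ?thesis .
    qed
    finally show ?thesis .
  qed
qed

end


lemma enn_exp_ennreal: "0 \<le> r \<Longrightarrow> enn_exp (ennreal r) = ennreal (exp r)"
  by (simp add: enn_exp_def)

lemma enn_exp_le_series: "enn_exp y \<le> (\<Sum>n. y ^ n * ennreal (1 / fact n))"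
proof (cases "y = \<top>")
  case True
  have "\<top> = y ^ 1 * ennreal (1 / fact 1)" using True by simp
  also have "\<dots> \<le> (\<Sum>n<2. y ^ n * ennreal (1 / fact n))"
    by (rule member_le_sum) auto
  also have "\<dots> \<le> (\<Sum>n. y ^ n * ennreal (1 / fact n))"
    unfolding suminf_eq_SUP by (rule SUP_upper) simp
  finally have "\<top> \<le> (\<Sum>n. y ^ n * ennreal (1 / fact n))" .
  then show ?thesis by (simp add: top_unique)
next
  case False
  then obtain r where r: "y = ennreal r" "0 \<le> r" by (cases y) auto
  have "(\<lambda>n. r ^ n / fact n) sums exp r"
    using exp_converges[of r] by (simp add: divide_inverse mult.commute)
  then have s: "summable (\<lambda>n. r ^ n / fact n)" "exp r = (\<Sum>n. r ^ n / fact n)"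
    by (auto simp: sums_iff)
  have "(\<Sum>n. y ^ n * ennreal (1 / fact n)) = (\<Sum>n. ennreal (r ^ n / fact n))"
    using r by (intro suminf_cong) (simp add: ennreal_power ennreal_mult[symmetric])
  also have "\<dots> = ennreal (\<Sum>n. r ^ n / fact n)"
    using r s by (intro suminf_ennreal2) auto
  finally show ?thesis using r s by (simp add: enn_exp_ennreal)
qed

lemma fact_sq_le: "fact k * fact k \<le> (fact (2 * k) :: real)"
proof -
  have "fact k * fact (2 * k - k) * (2 * k choose k) = (fact (2 * k) :: nat)"
    by (rule binomial_fact_lemma) simp
  then have "fact k * fact k * (2 * k choose k) = (fact (2 * k) :: nat)" by simp
  moreover have "1 \<le> (2 * k choose k)" by (simp add: Suc_le_eq)
  ultimately have "fact k * fact k \<le> (fact (2 * k) :: nat)"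
    by (metis mult.right_neutral mult_le_mono2)
  then show ?thesis by (metis of_nat_fact of_nat_le_iff of_nat_mult)
qed

lemma sum_pairs: "(\<Sum>n<2 * N. g n) = (\<Sum>k<N. g (2 * k) + g (2 * k + 1))" for g :: "nat \<Rightarrow> real"
  by (induction N) (simp_all add: ac_simps)

lemma exp_partial: "0 \<le> (x::real) \<Longrightarrow> (\<Sum>k<N. x ^ k / fact k) \<le> exp x"
proof -
  assume x: "0 \<le> x"
  have "(\<lambda>n. x ^ n / fact n) sums exp x"
    using exp_converges[of x] unfolding scaleR_conv_of_real divide_inverse by (simp add: mult.commute)
  then have s: "summable (\<lambda>n. x ^ n / fact n)" "exp x = (\<Sum>n. x ^ n / fact n)"
    by (auto simp: sums_iff)
  show ?thesis unfolding s(2) using s(1) x by (intro sum_le_suminf) auto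
qed

lemma series_bound:
  fixes A :: real assumes A: "0 \<le> A"
  shows "(\<Sum>n<N. A ^ n / sqrt (fact n)) \<le> (1 + A) * exp (A\<^sup>2)"
proof -
  let ?g = "\<lambda>n. A ^ n / sqrt (fact n)"
  have "(\<Sum>n<N. ?g n) \<le> (\<Sum>n<2 * N. ?g n)"
    using A by (intro sum_mono2) auto
  also have "\<dots> = (\<Sum>k<N. ?g (2 * k) + ?g (2 * k + 1))" by (rule sum_pairs)
  also have "\<dots> \<le> (\<Sum>k<N. (1 + A) * ((A\<^sup>2) ^ k / fact k))"
  proof (rule sum_mono)
    fix k
    have fk: "fact k \<le> sqrt (fact (2 * k))"
      using fact_sq_le[of k] by (intro real_le_rsqrt) (simp add: power2_eq_square)
    have fk': "fact k \<le> sqrt (fact (2 * k + 1))"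
      using fk by (rule order_trans) (intro real_sqrt_le_mono fact_mono; simp)
    have fkp: "0 < (fact k :: real)" by simp
    have "?g (2 * k) \<le> A ^ (2 * k) / fact k"
      using A fk fkp by (intro divide_left_mono) auto
    moreover have "?g (2 * k + 1) \<le> A ^ (2 * k + 1) / fact k"
      using A fk' fkp by (intro divide_left_mono) auto
    moreover have "A ^ (2 * k) / fact k + A ^ (2 * k + 1) / fact k = (1 + A) * ((A\<^sup>2) ^ k / fact k)"
    proof -
      have e1: "A ^ (2 * k) = (A\<^sup>2) ^ k" by (simp add: power_mult)
      have e2: "A ^ (2 * k + 1) = A * (A\<^sup>2) ^ k" by (simp add: power_mult)
      show ?thesis unfolding e1 e2 by (simp add: field_simps)
    qed
    ultimately show "?g (2 * k) + ?g (2 * k + 1) \<le> (1 + A) * ((A\<^sup>2) ^ k / fact k)" by linarith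
  qed
  also have "\<dots> = (1 + A) * (\<Sum>k<N. (A\<^sup>2) ^ k / fact k)" by (simp add: sum_distrib_left)
  also have "\<dots> \<le> (1 + A) * exp (A\<^sup>2)"
    using A by (intro mult_left_mono exp_partial) auto
  finally show ?thesis .
qed

lemma second_ineq:
  fixes A :: real assumes A: "0 \<le> A"
  shows "(1 + A) * exp (A\<^sup>2) \<le> 2 * exp (2 * A\<^sup>2)"
proof -
  have h: "A \<le> 1 + 2 * A\<^sup>2"
  proof (cases "A \<le> 1")
    case True then show ?thesis by (simp add: power2_eq_square) (smt (verit) A mult_nonneg_nonneg)
  next
    case False
    then have "A * 1 \<le> A * A" using A by (intro mult_left_mono) auto
    moreover have "0 \<le> A * A" using A by simp
    ultimately show ?thesis unfolding power2_eq_square by linarith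
  qed
  have "1 + A \<le> 2 * exp (A\<^sup>2)"
    using exp_ge_add_one_self[of "A\<^sup>2"] h by linarith
  then have "(1 + A) * exp (A\<^sup>2) \<le> (2 * exp (A\<^sup>2)) * exp (A\<^sup>2)"
    by (intro mult_right_mono) auto
  also have "\<dots> = 2 * (exp (A\<^sup>2) * exp (A\<^sup>2))"
    by (simp only: mult.assoc)
  also have "exp (A\<^sup>2) * exp (A\<^sup>2) = exp (2 * A\<^sup>2)"
    by (simp only: mult_2 exp_add)
  finally show ?thesis .
qed



lemma fact_inv_ennreal: "(fact n :: ennreal) * ennreal (1 / fact n) = 1"
proof -
  have "(fact n :: ennreal) = ennreal (fact n)"
    by (metis ennreal_of_nat_eq_real_of_nat of_nat_fact)
  then show ?thesis
    by (simp add: ennreal_mult[symmetric])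
qed

context bmd begin

lemma main:
  assumes lam: "0 < lam"
  shows "(\<integral>\<^sup>+w. enn_exp (ennreal lam * (\<integral>\<^sup>+ s\<in>{0..t}. ennreal (b (X s w)) \<partial>lborel)) \<partial>Px)
     \<le> (1 + ennreal (lam * sqrt t) * Lam) * enn_exp (ennreal (lam\<^sup>2 * t) * Lam\<^sup>2)"
proof (cases "Lam = \<top>")
  case True
  have p1: "0 < lam * sqrt t" using lam tpos by simp
  have p2: "0 < lam\<^sup>2 * t" using lam tpos by simp
  have "ennreal (lam * sqrt t) * Lam = \<top>" using True p1 lam tpos by (simp add: ennreal_mult_eq_top_iff)
  moreover have "ennreal (lam\<^sup>2 * t) * Lam\<^sup>2 = \<top>" using True p2 lam tpos by (simp add: ennreal_mult_eq_top_iff)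
  ultimately have "(1 + ennreal (lam * sqrt t) * Lam) * enn_exp (ennreal (lam\<^sup>2 * t) * Lam\<^sup>2) = \<top>"
    by (simp add: enn_exp_def)
  then show ?thesis by simp
next
  case False
  then obtain L where L: "Lam = ennreal L" "0 \<le> L" by (cases Lam) auto
  interpret P: prob_space Px by (rule prob)
  define A where "A = lam * sqrt t * L"
  have A0: "0 \<le> A" using lam tpos L by (simp add: A_def)
  define I where "I w = (\<integral>\<^sup>+ s\<in>{0..t}. ennreal (b (X s w)) \<partial>lborel)" for w
  define Fw where "Fw w = (\<integral>\<^sup>+u. indicator {0<..<t} u * fw w u \<partial>lborel)" for w
  have fwm: "fw w \<in> borel_measurable borel" if "w \<in> space Px" for w
    using measurable_Pair2[OF fw_joint that] by simp
  have Tm: "(\<lambda>w. Tn (fw w) t n 0) \<in> borel_measurable Px" for n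
    using measurable_Pair1[OF Tn_fw_joint[of t n], of 0] by simp
  have IF: "AE w in Px. I w = Fw w"
    using AE_G
  proof eventually_elim
    case (elim w)
    have "I w = (\<integral>\<^sup>+s. ennreal (b (X s w)) * indicator {0..t} s \<partial>lborel)" by (simp add: I_def)
    also have "\<dots> = (\<integral>\<^sup>+s. indicator {0<..<t} s * fw w s \<partial>lborel)"
    proof (rule nn_integral_cong_AE)
      show "AE s in lborel. ennreal (b (X s w)) * indicator {0..t} s = indicator {0<..<t} s * fw w s"
        using AE_lborel_singleton[of 0] AE_lborel_singleton[of t]
      proof eventually_elim
        case (elim s)
        then show ?case using \<open>w \<in> G\<close> by (auto simp: indicator_def fw_def X'_def bb_def)
      qed
    qed
    finally show ?case by (simp add: Fw_def)
  qed
  have series: "enn_exp (ennreal lam * Fw w) \<le> (\<Sum>n. ennreal lam ^ n * Tn (fw w) t n 0)" if w: "w \<in> space Px" for w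
  proof -
    have "enn_exp (ennreal lam * Fw w) \<le> (\<Sum>n. (ennreal lam * Fw w) ^ n * ennreal (1 / fact n))"
      by (rule enn_exp_le_series)
    also have "\<dots> = (\<Sum>n. ennreal lam ^ n * Tn (fw w) t n 0)"
    proof (rule suminf_cong)
      fix n
      have "(ennreal lam * Fw w) ^ n * ennreal (1 / fact n) = ennreal lam ^ n * (Fw w ^ n * ennreal (1 / fact n))"
        by (simp add: power_mult_distrib mult.assoc)
      also have "Fw w ^ n = fact n * Tn (fw w) t n 0"
        unfolding Fw_def using Tn_fact[OF fwm[OF w], of n t 0] by simp
      also have "fact n * Tn (fw w) t n 0 * ennreal (1 / fact n) = (fact n * ennreal (1 / fact n)) * Tn (fw w) t n 0"
        by (simp only: mult_ac)
      also have "\<dots> = Tn (fw w) t n 0"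
        unfolding fact_inv_ennreal by simp
      finally show "(ennreal lam * Fw w) ^ n * ennreal (1 / fact n) = ennreal lam ^ n * Tn (fw w) t n 0" .
    qed
    finally show ?thesis .
  qed
  have bound: "(\<integral>\<^sup>+w. Tn (fw w) t n 0 \<partial>Px) \<le> Lam ^ n * ennreal (sqrt t ^ n / sqrt (fact n))" for n
  proof -
    have "(\<integral>\<^sup>+w. 1 * Tn (fw w) t n 0 \<partial>Px) \<le> Lam ^ n * ennreal (sqrt (t - 0) ^ n / sqrt (fact n)) * (\<integral>\<^sup>+w. 1 \<partial>Px)"
      using tpos by (intro key) auto
    then show ?thesis by (simp add: P.emeasure_space_1)
  qed
  have termeq: "ennreal lam ^ n * (Lam ^ n * ennreal (sqrt t ^ n / sqrt (fact n))) = ennreal (A ^ n / sqrt (fact n))" for n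
  proof -
    have "ennreal lam ^ n * (Lam ^ n * ennreal (sqrt t ^ n / sqrt (fact n))) = ennreal (lam ^ n) * (ennreal (L ^ n) * ennreal (sqrt t ^ n / sqrt (fact n)))"
      using lam L by (simp add: ennreal_power)
    also have "\<dots> = ennreal (lam ^ n * (L ^ n * (sqrt t ^ n / sqrt (fact n))))"
    proof -
      have h1: "0 \<le> L ^ n" "0 \<le> sqrt t ^ n / sqrt (fact n)" "0 \<le> lam ^ n" "0 \<le> L ^ n * (sqrt t ^ n / sqrt (fact n))"
        using L lam tpos by auto
      show ?thesis
        by (simp only: ennreal_mult[symmetric, OF h1(1) h1(2)] ennreal_mult[symmetric, OF h1(3) h1(4)])
    qed
    also have "lam ^ n * (L ^ n * (sqrt t ^ n / sqrt (fact n))) = A ^ n / sqrt (fact n)"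
      by (simp add: A_def power_mult_distrib)
    finally show ?thesis .
  qed
  have "(\<integral>\<^sup>+w. enn_exp (ennreal lam * I w) \<partial>Px) = (\<integral>\<^sup>+w. enn_exp (ennreal lam * Fw w) \<partial>Px)"
    by (rule nn_integral_cong_AE) (use IF in eventually_elim, simp)
  also have "\<dots> \<le> (\<integral>\<^sup>+w. (\<Sum>n. ennreal lam ^ n * Tn (fw w) t n 0) \<partial>Px)"
    by (rule nn_integral_mono) (rule series)
  also have "\<dots> = (\<Sum>n. \<integral>\<^sup>+w. ennreal lam ^ n * Tn (fw w) t n 0 \<partial>Px)"
    by (rule nn_integral_suminf) (use Tm in simp)
  also have "\<dots> = (\<Sum>n. ennreal lam ^ n * (\<integral>\<^sup>+w. Tn (fw w) t n 0 \<partial>Px))"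
    by (intro suminf_cong nn_integral_cmult Tm)
  also have "\<dots> \<le> (\<Sum>n. ennreal (A ^ n / sqrt (fact n)))"
    by (intro suminf_le summableI) (use bound termeq in \<open>metis mult_left_mono zero_le\<close>)
  also have "\<dots> \<le> ennreal ((1 + A) * exp (A\<^sup>2))"
    unfolding suminf_eq_SUP
  proof (rule SUP_least)
    fix N
    have "(\<Sum>n<N. ennreal (A ^ n / sqrt (fact n))) = ennreal (\<Sum>n<N. A ^ n / sqrt (fact n))"
      using A0 by (intro sum_ennreal) simp
    also have "\<dots> \<le> ennreal ((1 + A) * exp (A\<^sup>2))"
      by (intro ennreal_leI series_bound A0)
    finally show "(\<Sum>n<N. ennreal (A ^ n / sqrt (fact n))) \<le> ennreal ((1 + A) * exp (A\<^sup>2))" .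
  qed
  also have "ennreal ((1 + A) * exp (A\<^sup>2)) = (1 + ennreal (lam * sqrt t) * Lam) * enn_exp (ennreal (lam\<^sup>2 * t) * Lam\<^sup>2)"
  proof -
    have e1: "1 + ennreal (lam * sqrt t) * Lam = ennreal (1 + A)"
      using lam tpos L A0 by (simp add: A_def ennreal_mult[symmetric] ennreal_plus[symmetric])
    have "ennreal (lam\<^sup>2 * t) * Lam\<^sup>2 = ennreal (lam\<^sup>2 * t * L\<^sup>2)"
      using lam tpos L by (simp add: ennreal_power ennreal_mult[symmetric])
    also have "lam\<^sup>2 * t * L\<^sup>2 = A\<^sup>2"
      using tpos by (simp add: A_def power_mult_distrib)
    finally have e2: "enn_exp (ennreal (lam\<^sup>2 * t) * Lam\<^sup>2) = ennreal (exp (A\<^sup>2))"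
      by (simp add: enn_exp_ennreal)
    have ha: "0 \<le> 1 + A" using A0 by simp
    have hb: "0 \<le> exp (A\<^sup>2)" by simp
    show ?thesis unfolding e1 e2 by (rule ennreal_mult[OF ha hb])
  qed
  finally show ?thesis by (simp add: I_def)
qed

end

lemma rhs_eq:
  assumes lam: "0 < lam" and t: "0 < t" and L: "0 \<le> L"
  shows "(1 + ennreal (lam * sqrt t) * ennreal L) * enn_exp (ennreal (lam\<^sup>2 * t) * (ennreal L)\<^sup>2)
       = ennreal ((1 + lam * sqrt t * L) * exp ((lam * sqrt t * L)\<^sup>2))"
proof -
  define A where "A = lam * sqrt t * L"
  have A0: "0 \<le> A" using lam t L by (simp add: A_def)
  have e1: "1 + ennreal (lam * sqrt t) * ennreal L = ennreal (1 + A)"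
    using lam t L A0 by (simp add: A_def ennreal_mult[symmetric] ennreal_plus[symmetric])
  have "ennreal (lam\<^sup>2 * t) * (ennreal L)\<^sup>2 = ennreal (lam\<^sup>2 * t * L\<^sup>2)"
    using lam t L by (simp add: ennreal_power ennreal_mult[symmetric])
  also have "lam\<^sup>2 * t * L\<^sup>2 = A\<^sup>2"
    using t by (simp add: A_def power_mult_distrib)
  finally have e2: "enn_exp (ennreal (lam\<^sup>2 * t) * (ennreal L)\<^sup>2) = ennreal (exp (A\<^sup>2))"
    by (simp add: enn_exp_ennreal)
  have ha: "0 \<le> 1 + A" using A0 by simp
  have hb: "0 \<le> exp (A\<^sup>2)" by simp
  show ?thesis unfolding e1 e2 A_def[symmetric] by (rule ennreal_mult[OF ha hb, symmetric])
qed

lemma second_conj: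
  assumes lam: "0 < lam" and t: "0 < t"
  shows "(1 + ennreal (lam * sqrt t) * Lm) * enn_exp (ennreal (lam\<^sup>2 * t) * Lm\<^sup>2)
           \<le> 2 * enn_exp (2 * ennreal (lam\<^sup>2 * t) * Lm\<^sup>2)"
proof (cases "Lm = \<top>")
  case True
  have p2: "0 < lam\<^sup>2 * t" using lam t by simp
  have "2 * ennreal (lam\<^sup>2 * t) * Lm\<^sup>2 = \<top>" using True p2 lam t by (simp add: ennreal_mult_eq_top_iff)
  then show ?thesis by (simp add: enn_exp_def)
next
  case False
  then obtain L where L: "Lm = ennreal L" "0 \<le> L" by (cases Lm) auto
  define A where "A = lam * sqrt t * L"
  have A0: "0 \<le> A" using lam t L by (simp add: A_def)
  have "ennreal (lam\<^sup>2 * t) * (ennreal L)\<^sup>2 = ennreal (lam\<^sup>2 * t * L\<^sup>2)"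
    using lam t L by (simp add: ennreal_power ennreal_mult[symmetric])
  also have "lam\<^sup>2 * t * L\<^sup>2 = A\<^sup>2"
    using t by (simp add: A_def power_mult_distrib)
  finally have X: "ennreal (lam\<^sup>2 * t) * (ennreal L)\<^sup>2 = ennreal (A\<^sup>2)" .
  have two: "2 * ennreal y = ennreal (2 * y)" if "0 \<le> y" for y :: real
  proof -
    have "ennreal (2 * y) = ennreal 2 * ennreal y" using that by (intro ennreal_mult) auto
    then show ?thesis by simp
  qed
  have "2 * ennreal (lam\<^sup>2 * t) * Lm\<^sup>2 = 2 * (ennreal (lam\<^sup>2 * t) * (ennreal L)\<^sup>2)"
    unfolding L(1) by (simp only: mult.assoc)
  also have "\<dots> = ennreal (2 * A\<^sup>2)" unfolding X by (rule two) simp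
  finally have r0: "2 * ennreal (lam\<^sup>2 * t) * Lm\<^sup>2 = ennreal (2 * A\<^sup>2)" .
  have r: "2 * enn_exp (2 * ennreal (lam\<^sup>2 * t) * Lm\<^sup>2) = ennreal (2 * exp (2 * A\<^sup>2))"
  proof -
    have h: "0 \<le> 2 * A\<^sup>2" by simp
    show ?thesis unfolding r0 enn_exp_ennreal[OF h] by (rule two) simp
  qed
  show ?thesis
    unfolding r unfolding L(1) rhs_eq[OF lam t L(2)] A_def[symmetric]
    using second_ineq[OF A0] by (rule ennreal_leI)
qed

theorem proposition2p2:
  fixes Om :: "'w measure" and P :: "real^'d \<Rightarrow> 'w measure" and F :: "real \<Rightarrow> 'w measure"
    and X :: "real \<Rightarrow> 'w \<Rightarrow> real^'d" and W :: "real^'d \<Rightarrow> real \<Rightarrow> 'w \<Rightarrow> real^'d"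
    and q :: "real \<Rightarrow> real^'d \<Rightarrow> real^'d \<Rightarrow> real"
    and mup mun :: "'d \<Rightarrow> (real^'d) measure"
    and b :: "real^'d \<Rightarrow> real"
    and lam t :: real and x :: "real^'d"
  assumes dim: "CARD('d) \<ge> 3"
    and X: "BM_with_drift Om P F X W q mup mun"
    and b_nonneg: "\<forall>y. 0 \<le> b y"
    and b_kato: "kato_class_fun b"
    and lam_pos: "0 < lam" and t: "0 < t"
  shows "(\<integral>\<^sup>+ \<omega>. enn_exp (ennreal lam * (\<integral>\<^sup>+ s\<in>{0..t}. ennreal (b (X s \<omega>)) \<partial>lborel)) \<partial>(P x))
           \<le> (1 + ennreal (lam * sqrt t) * Lambda_fun q t b)
               * enn_exp (ennreal (lam\<^sup>2 * t) * (Lambda_fun q t b)\<^sup>2)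
       \<and> (1 + ennreal (lam * sqrt t) * Lambda_fun q t b)
               * enn_exp (ennreal (lam\<^sup>2 * t) * (Lambda_fun q t b)\<^sup>2)
           \<le> 2 * enn_exp (2 * ennreal (lam\<^sup>2 * t) * (Lambda_fun q t b)\<^sup>2)"
proof
  have filt: "filtration (space Om) F" and Fsub: "\<And>s. sets (F s) \<subseteq> sets Om"
    using X by (auto simp: BM_with_drift_def is_filtration_def)
  have prob: "prob_space (P x)" and setsP: "sets (P x) = sets Om"
    using X by (auto simp: BM_with_drift_def)
  have Xm: "\<And>s. 0 \<le> s \<Longrightarrow> X s \<in> borel_measurable (F s)"
    using X by (auto simp: BM_with_drift_def)
  have AEx: "AE w in P x. X 0 w = x \<and> continuous_on {0..} (\<lambda>t. X t w)"
    using X by (auto simp: BM_with_drift_def)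
  have fd: "feller_density q" and md: "markov_density Om P F X q"
    using X by (auto simp: BM_with_drift_def)
  have qpos: "\<And>r y z. 0 < r \<Longrightarrow> 0 \<le> q r y z"
    using fd by (auto simp: feller_density_def)
  have qcont: "continuous_on ({0<..} \<times> UNIV \<times> UNIV) (\<lambda>(r, y, z). q r y z)"
    using fd by (auto simp: feller_density_def)
  have markov: "\<And>s r A f. 0 \<le> s \<Longrightarrow> 0 < r \<Longrightarrow> A \<in> sets (F s) \<Longrightarrow> f \<in> borel_measurable borel \<Longrightarrow>
        (\<integral>\<^sup>+ w. indicator A w * f (X (s + r) w) \<partial>P x)
          = (\<integral>\<^sup>+ w. indicator A w * (\<integral>\<^sup>+ y. ennreal (q r (X s w) y) * f y \<partial>lborel) \<partial>P x)"
    using md by (auto simp: markov_density_def)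
  have bm: "b \<in> borel_measurable borel" using b_kato by (simp add: kato_class_fun_def)
  from AEx obtain N where N: "{w \<in> space (P x). \<not> (X 0 w = x \<and> continuous_on {0..} (\<lambda>t. X t w))} \<subseteq> N"
      "emeasure (P x) N = 0" "N \<in> sets (P x)"
    by (rule AE_E)
  have spaceP: "space (P x) = space Om" using setsP by (rule sets_eq_imp_space_eq)
  define G where "G = space Om - N"
  have Gsets: "G \<in> sets Om" using N(3) setsP unfolding G_def by auto
  have NS: "N \<subseteq> space Om" using sets.sets_into_space[OF N(3)] spaceP by simp
  have Gnull: "emeasure (P x) (space Om - G) = 0"
    using N(2) NS by (simp add: G_def Diff_Diff_Int Int_absorb1)
  have Gcont: "\<And>w. w \<in> G \<Longrightarrow> continuous_on {0..} (\<lambda>s. X s w)"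
    using N(1) spaceP by (auto simp: G_def)
  interpret B: bmd Om "P x" F X q b x G t
    by (rule bmd.intro[OF filt Fsub prob setsP Xm Gsets Gnull Gcont qpos qcont markov bm b_nonneg[rule_format] t])
  show "(\<integral>\<^sup>+ \<omega>. enn_exp (ennreal lam * (\<integral>\<^sup>+ s\<in>{0..t}. ennreal (b (X s \<omega>)) \<partial>lborel)) \<partial>(P x))
           \<le> (1 + ennreal (lam * sqrt t) * Lambda_fun q t b)
               * enn_exp (ennreal (lam\<^sup>2 * t) * (Lambda_fun q t b)\<^sup>2)"
    using B.main[OF lam_pos] unfolding B.Lam_def .
next
  show "(1 + ennreal (lam * sqrt t) * Lambda_fun q t b)
               * enn_exp (ennreal (lam\<^sup>2 * t) * (Lambda_fun q t b)\<^sup>2)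
           \<le> 2 * enn_exp (2 * ennreal (lam\<^sup>2 * t) * (Lambda_fun q t b)\<^sup>2)"
    by (rule second_conj[OF lam_pos t])
qed

end
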